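(* Let $k\ge 1$. (a) There are infinitely many graphs $G$ (each with the property that any $k$ vertices lie in a common cycle) such that \[ crx_k(G)-rx_k(G)=\begin{cases}3,& k=1,\\ 2,& k=2,3,\\ 1,& k\ge 4.\end{cases} \] (b) For every $c\ge 1$, there exists a graph $G$ (with the property that any $k$ vertices lie in a common cycle) such that $rx_k(G)\le k^2-1$ and $crx_k(G)\ge c$. In particular, $crx_k(G)-rx_k(G)$ can be arbitrarily large.
   Context: An edge-coloured subgraph is rainbow if its edges have distinct colours. For a graph $G$ in which any $k$ vertices lie on a common cycle, $crx_k(G)$ is the minimum number of colours in an edge-colouring of $G$ such that every set of $k$ vertices lies in some rainbow cycle. For a connected graph $G$ on $n$ vertices and $2\le k\le n$, $rx_k(G)$ (the $k$-rainbow index) is the minimum number of colours in an edge-colouring of $G$ such that any $k$ vertices are contained in a rainbow tree; by convention $rx_1(G)=0$ for every graph $G$. *)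

theory Defs
  imports Main
begin

definition simple_graph :: "'a set \<Rightarrow> 'a set set \<Rightarrow> bool" where
  "simple_graph V E \<longleftrightarrow> finite V \<and> (\<forall>e\<in>E. \<exists>u v. u \<in> V \<and> v \<in> V \<and> u \<noteq> v \<and> e = {u, v})"

definition graph_connected :: "'a set \<Rightarrow> 'a set set \<Rightarrow> bool" where
  "graph_connected V E \<longleftrightarrow> V \<noteq> {} \<and> (\<forall>u\<in>V. \<forall>v\<in>V. (\<lambda>x y. {x, y} \<in> E)\<^sup>*\<^sup>* u v)"

definition cycle_edges :: "'a list \<Rightarrow> 'a set set" where
  "cycle_edges vs = {{vs ! i, vs ! ((i + 1) mod length vs)} | i. i < length vs}"

definition is_cycle :: "'a set set \<Rightarrow> 'a list \<Rightarrow> bool" where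
  "is_cycle E vs \<longleftrightarrow> length vs \<ge> 3 \<and> distinct vs \<and> cycle_edges vs \<subseteq> E"

definition is_tree_in :: "'a set \<Rightarrow> 'a set set \<Rightarrow> 'a set \<Rightarrow> 'a set set \<Rightarrow> bool" where
  "is_tree_in V E TV TE \<longleftrightarrow> TV \<subseteq> V \<and> TE \<subseteq> E \<and> (\<forall>e\<in>TE. e \<subseteq> TV)
     \<and> graph_connected TV TE \<and> \<not> (\<exists>vs. is_cycle TE vs)"

definition rainbow :: "('a set \<Rightarrow> nat) \<Rightarrow> 'a set set \<Rightarrow> bool" where
  "rainbow c F \<longleftrightarrow> inj_on c F"

definition colouring :: "'a set set \<Rightarrow> nat \<Rightarrow> ('a set \<Rightarrow> nat) \<Rightarrow> bool" where
  "colouring E m c \<longleftrightarrow> c ` E \<subseteq> {..<m}"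

definition k_cyclic :: "nat \<Rightarrow> 'a set \<Rightarrow> 'a set set \<Rightarrow> bool" where
  "k_cyclic k V E \<longleftrightarrow> (\<forall>S. S \<subseteq> V \<and> card S = k \<longrightarrow> (\<exists>vs. is_cycle E vs \<and> S \<subseteq> set vs))"

definition crx :: "nat \<Rightarrow> 'a set \<Rightarrow> 'a set set \<Rightarrow> nat" where
  "crx k V E = (LEAST m. \<exists>c. colouring E m c \<and>
      (\<forall>S. S \<subseteq> V \<and> card S = k \<longrightarrow>
         (\<exists>vs. is_cycle E vs \<and> S \<subseteq> set vs \<and> rainbow c (cycle_edges vs))))"

definition rx :: "nat \<Rightarrow> 'a set \<Rightarrow> 'a set set \<Rightarrow> nat" where
  "rx k V E = (if k = 1 then 0 else (LEAST m. \<exists>c. colouring E m c \<and>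
      (\<forall>S. S \<subseteq> V \<and> card S = k \<longrightarrow>
         (\<exists>TV TE. is_tree_in V E TV TE \<and> S \<subseteq> TV \<and> rainbow c TE))))"

end

theory Submission
  imports Defs
begin


lemma simple_graph_finite_E:
  assumes "simple_graph V E" shows "finite E"
proof -
  have "E \<subseteq> Pow V"
  proof
    fix e assume "e \<in> E"
    then obtain u v where "u \<in> V" "v \<in> V" "e = {u, v}" using assms unfolding simple_graph_def by meson
    then show "e \<in> Pow V" by simp
  qed
  moreover have "finite V" using assms unfolding simple_graph_def by simp
  ultimately show ?thesis by (meson finite_Pow_iff finite_subset)
qed

definition cyc_edge :: "'a list \<Rightarrow> nat \<Rightarrow> 'a set" where
  "cyc_edge vs i = {vs ! i, vs ! ((i + 1) mod length vs)}"

lemma cycle_edges_eq: "cycle_edges vs = cyc_edge vs ` {..<length vs}"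
  unfolding cycle_edges_def cyc_edge_def by auto

lemma cyc_edge_inj:
  assumes "distinct vs" "length vs \<ge> 3"
  shows "inj_on (cyc_edge vs) {..<length vs}"
proof (rule inj_onI)
  fix i j assume i: "i \<in> {..<length vs}" and j: "j \<in> {..<length vs}" and eq: "cyc_edge vs i = cyc_edge vs j"
  let ?L = "length vs"
  have L0: "?L > 0" using assms(2) by linarith
  have ip: "(i+1) mod ?L < ?L" "(j+1) mod ?L < ?L" using L0 mod_less_divisor by blast+
  from eq have "(vs!i = vs!j \<and> vs!((i+1) mod ?L) = vs!((j+1) mod ?L)) \<or> (vs!i = vs!((j+1) mod ?L) \<and> vs!((i+1) mod ?L) = vs!j)"
    unfolding cyc_edge_def by (auto simp: doubleton_eq_iff)
  then show "i = j"
  proof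
    assume "vs!i = vs!j \<and> vs!((i+1) mod ?L) = vs!((j+1) mod ?L)" then show ?thesis using i j nth_eq_iff_index_eq[OF assms(1), of i j] by auto
  next
    assume h: "vs!i = vs!((j+1) mod ?L) \<and> vs!((i+1) mod ?L) = vs!j"
    have iL: "i < ?L" and jL: "j < ?L" using i j by simp_all
    have "i = (j+1) mod ?L" using h nth_eq_iff_index_eq[OF assms(1) iL ip(2)] by simp
    moreover have "(i+1) mod ?L = j" using h nth_eq_iff_index_eq[OF assms(1) ip(1) jL] by simp
    moreover have "?L \<noteq> 0" using L0 by linarith
    ultimately show ?thesis using i j assms(2) by (auto simp: mod_if split: if_splits)
  qed
qed

lemma card_cycle_edges:
  assumes "is_cycle E vs" shows "card (cycle_edges vs) = length vs"
  using assms cyc_edge_inj[of vs] unfolding is_cycle_def cycle_edges_eq by (simp add: card_image)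

lemma rainbow_card_le:
  assumes "rainbow c F" "colouring E m c" "F \<subseteq> E" shows "card F \<le> m"
proof -
  have "c ` F \<subseteq> {..<m}" using assms unfolding colouring_def by blast
  then show ?thesis using assms(1) card_inj_on_le[of c F "{..<m}"] unfolding rainbow_def by auto
qed

lemma rtranclp_edge_sym:
  assumes "(\<lambda>x y. {x,y} \<in> F)\<^sup>*\<^sup>* a b" shows "(\<lambda>x y. {x,y} \<in> F)\<^sup>*\<^sup>* b a"
  using assms
proof (induction rule: rtranclp_induct)
  case base then show ?case by simp
next
  case (step y z)
  then have "{z,y} \<in> F" by (simp add: insert_commute)
  then show ?case using step(3) by (simp add: converse_rtranclp_into_rtranclp)
qed

lemma conn_root:
  assumes "r \<in> TV" "\<And>v. v \<in> TV \<Longrightarrow> (\<lambda>x y. {x,y} \<in> TE)\<^sup>*\<^sup>* v r"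
  shows "graph_connected TV TE"
  unfolding graph_connected_def
proof (intro conjI ballI)
  show "TV \<noteq> {}" using assms(1) by auto
  fix u v assume u: "u \<in> TV" and v: "v \<in> TV"
  have "(\<lambda>x y. {x,y} \<in> TE)\<^sup>*\<^sup>* u r" "(\<lambda>x y. {x,y} \<in> TE)\<^sup>*\<^sup>* r v"
    using assms(2)[OF u] rtranclp_edge_sym[OF assms(2)[OF v]] by simp_all
  then show "(\<lambda>x y. {x,y} \<in> TE)\<^sup>*\<^sup>* u v" by (rule rtranclp_trans)
qed

lemma conn_card:
  assumes "graph_connected TV TE" "finite TE"
  shows "card TV \<le> card TE + 1"
proof (cases "finite TV")
  case False then show ?thesis by simp
next
  case True
  define R where "R = (\<lambda>x y. {x,y} \<in> TE)"
  obtain r where r: "r \<in> TV" using assms unfolding graph_connected_def by auto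
  define d where "d = (\<lambda>v. LEAST n. (R ^^ n) r v)"
  have ex: "\<exists>u. R u v \<and> d u < d v" if v: "v \<in> TV - {r}" for v
  proof -
    have "R\<^sup>*\<^sup>* r v" using assms r v unfolding graph_connected_def R_def by auto
    then obtain n where "(R ^^ n) r v" using rtranclp_imp_relpowp by metis
    then have dv: "(R ^^ d v) r v" unfolding d_def by (rule LeastI)
    have "d v \<noteq> 0"
    proof
      assume "d v = 0" then have "r = v" using dv by simp
      then show False using v by simp
    qed
    then obtain p where p: "d v = Suc p" using not0_implies_Suc by blast
    then obtain u where "(R ^^ p) r u" "R u v" using dv relpowp_Suc_E by metis
    moreover then have "d u \<le> p" unfolding d_def by (simp add: Least_le)
    ultimately show ?thesis using p by auto
  qed
  define pre where "pre = (\<lambda>v. SOME u. R u v \<and> d u < d v)"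
  have pre: "R (pre v) v \<and> d (pre v) < d v" if "v \<in> TV - {r}" for v
    unfolding pre_def using someI_ex[OF ex[OF that]] .
  define f where "f = (\<lambda>v. {pre v, v})"
  have "inj_on f (TV - {r})"
  proof (rule inj_onI)
    fix v w assume v: "v \<in> TV - {r}" and w: "w \<in> TV - {r}" and eq: "f v = f w"
    show "v = w"
    proof (rule ccontr)
      assume "v \<noteq> w"
      then have "v = pre w" "w = pre v" using eq unfolding f_def by (auto simp: doubleton_eq_iff)
      then show False using pre[OF v] pre[OF w] by auto
    qed
  qed
  moreover have "f ` (TV - {r}) \<subseteq> TE" using pre unfolding f_def R_def by auto
  ultimately have "card (TV - {r}) \<le> card TE" using card_inj_on_le[OF _ _ assms(2)] by blast
  moreover have "card TV = Suc (card (TV - {r}))" using True r by (metis card_Suc_Diff1)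
  ultimately show ?thesis by simp
qed

lemma cycle_remove_edge_conn:
  assumes cyc: "is_cycle TE vs" and ab: "(\<lambda>x y. {x,y} \<in> TE)\<^sup>*\<^sup>* a b"
  shows "(\<lambda>x y. {x,y} \<in> TE - {{vs!0, vs!1}})\<^sup>*\<^sup>* a b"
proof -
  let ?L = "length vs"
  define R' where "R' = (\<lambda>x y. {x,y} \<in> TE - {{vs!0, vs!1}})"
  have L: "?L \<ge> 3" "distinct vs" "cycle_edges vs \<subseteq> TE" using cyc unfolding is_cycle_def by auto
  have Lne: "vs \<noteq> []"
  proof
    assume "vs = []" then show False using L(1) by simp
  qed
  have ce: "{vs!j, vs!((j+1) mod ?L)} \<in> TE" if "j < ?L" for j
  proof -
    have "cyc_edge vs j \<in> cycle_edges vs" unfolding cycle_edges_eq using that by simp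
    then show ?thesis using L(3) unfolding cyc_edge_def by blast
  qed
  have path: "R'\<^sup>*\<^sup>* (vs!1) (vs!j)" if "1 \<le> j" "j < ?L" for j
    using that
  proof (induction j)
    case 0 then show ?case by simp
  next
    case (Suc j)
    show ?case
    proof (cases "j = 0")
      case True then show ?thesis by simp
    next
      case False
      then have IH: "R'\<^sup>*\<^sup>* (vs!1) (vs!j)" using Suc.IH Suc.prems by simp
      have m: "(j+1) mod ?L = Suc j" using Suc.prems(2) by simp
      have "{vs!j, vs!(Suc j)} \<in> TE" using ce[of j] Suc.prems m by simp
      moreover have "{vs!j, vs!(Suc j)} \<noteq> {vs!0, vs!1}"
      proof
        assume "{vs!j, vs!(Suc j)} = {vs!0, vs!1}"
        then have "vs!0 = vs!j \<or> vs!0 = vs!Suc j" by (auto simp: doubleton_eq_iff)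
        then show False using nth_eq_iff_index_eq[OF L(2), of 0 j] nth_eq_iff_index_eq[OF L(2), of 0 "Suc j"] False Suc.prems Lne by auto
      qed
      ultimately have "R' (vs!j) (vs!Suc j)" unfolding R'_def by auto
      then show ?thesis using IH by simp
    qed
  qed
  have last: "R' (vs!(?L-1)) (vs!0)"
  proof -
    have "?L - 1 + 1 = ?L" using L by simp
    then have m: "(?L - 1 + 1) mod ?L = 0" by (metis mod_self)
    have "{vs!(?L-1), vs!0} \<in> TE" using ce[of "?L-1"] m L by auto
    moreover have "{vs!(?L-1), vs!0} \<noteq> {vs!0, vs!1}"
    proof
      assume "{vs!(?L-1), vs!0} = {vs!0, vs!1}"
      then have "vs!(?L-1) = vs!1 \<or> vs!(?L-1) = vs!0" by (auto simp: doubleton_eq_iff)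
      then show False using nth_eq_iff_index_eq[OF L(2), of "?L-1" 1] nth_eq_iff_index_eq[OF L(2), of "?L-1" 0] L(1) Lne by auto
    qed
    ultimately show ?thesis unfolding R'_def by auto
  qed
  have "R'\<^sup>*\<^sup>* (vs!1) (vs!(?L-1))" using path[of "?L-1"] L(1) by simp
  then have p10: "R'\<^sup>*\<^sup>* (vs!1) (vs!0)" using last by (rule rtranclp.rtrancl_into_rtrancl)
  have p01: "R'\<^sup>*\<^sup>* (vs!0) (vs!1)" unfolding R'_def by (rule rtranclp_edge_sym[OF p10[unfolded R'_def]])
  have st: "R'\<^sup>*\<^sup>* y z" if yz: "{y,z} \<in> TE" for y z
  proof (cases "{y,z} = {vs!0, vs!1}")
    case True
    then have "(y = vs!0 \<and> z = vs!1) \<or> (y = vs!1 \<and> z = vs!0)" by (auto simp: doubleton_eq_iff)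
    then show ?thesis using p10 p01 by (elim disjE) simp_all
  next
    case False then have "R' y z" using yz unfolding R'_def by simp
    then show ?thesis by (rule r_into_rtranclp)
  qed
  show ?thesis using ab unfolding R'_def[symmetric]
  proof (induction rule: rtranclp_induct)
    case base then show ?case by (rule rtranclp.rtrancl_refl)
  next
    case (step y z)
    show ?case using step(3) st[OF step(2)] by (rule rtranclp_trans)
  qed
qed

lemma conn_acyclic:
  assumes "graph_connected TV TE" "finite TE" "card TE < card TV"
  shows "\<not> is_cycle TE vs"
proof
  assume cyc: "is_cycle TE vs"
  let ?e = "{vs!0, vs!1}"
  have L: "length vs \<ge> 3" using cyc unfolding is_cycle_def by auto
  then have "0 < length vs" by linarith
  then have "cyc_edge vs 0 \<in> cycle_edges vs" unfolding cycle_edges_eq by (intro imageI) simp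
  moreover have "cyc_edge vs 0 = ?e" unfolding cyc_edge_def using L by simp
  ultimately have "?e \<in> cycle_edges vs" by simp
  then have e: "?e \<in> TE" using cyc unfolding is_cycle_def by auto
  have "graph_connected TV (TE - {?e})"
    using assms(1) cycle_remove_edge_conn[OF cyc] unfolding graph_connected_def by simp
  moreover have "finite (TE - {?e})" using assms(2) by simp
  ultimately have "card TV \<le> card (TE - {?e}) + 1" by (rule conn_card)
  moreover have "Suc (card (TE - {?e})) = card TE" using e assms(2) by (metis card_Suc_Diff1)
  ultimately show False using assms(3) by simp
qed

lemma tree_intro:
  assumes "TV \<subseteq> V" "TE \<subseteq> E" "\<forall>e\<in>TE. e \<subseteq> TV" "graph_connected TV TE" "finite TE" "card TE < card TV"
  shows "is_tree_in V E TV TE"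
  using assms conn_acyclic unfolding is_tree_in_def by blast



definition cedge :: "nat \<Rightarrow> nat \<Rightarrow> nat set" where
  "cedge n i = {i, Suc i mod n}"
definition CE :: "nat \<Rightarrow> nat set set" where
  "CE n = cedge n ` {..<n}"

lemma suc_mod_inj:
  fixes p q n :: nat
  assumes "p < n" "q < n" "Suc p mod n = Suc q mod n" shows "p = q"
  using assms by (auto simp: mod_if split: if_splits)

lemma cedge_lt: "Suc i < n \<Longrightarrow> cedge n i = {i, Suc i}"
  unfolding cedge_def by simp

lemma cedge_last: "0 < n \<Longrightarrow> cedge n (n - 1) = {n - 1, 0}"
  unfolding cedge_def by simp

lemma cedge_inj:
  assumes n: "3 \<le> n" shows "inj_on (cedge n) {..<n}"
proof (rule inj_onI)
  fix i j assume i: "i \<in> {..<n}" and j: "j \<in> {..<n}" and eq: "cedge n i = cedge n j"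
  then have "(i = j \<and> Suc i mod n = Suc j mod n) \<or> (i = Suc j mod n \<and> Suc i mod n = j)"
    unfolding cedge_def by (auto simp: doubleton_eq_iff)
  then show "i = j"
  proof
    assume "i = j \<and> Suc i mod n = Suc j mod n" then show ?thesis by simp
  next
    assume h: "i = Suc j mod n \<and> Suc i mod n = j"
    have "n \<noteq> 0" using n by linarith
    then show ?thesis using h i j n by (auto simp: mod_if split: if_splits)
  qed
qed

lemma card_CE: "3 \<le> n \<Longrightarrow> card (CE n) = n"
  unfolding CE_def using cedge_inj by (simp add: card_image)

lemma CE_mem:
  assumes "{x, y} \<in> CE n"
  shows "x < n \<and> y < n \<and> (y = Suc x mod n \<or> x = Suc y mod n)"
proof -
  obtain i where i: "i < n" "{x, y} = {i, Suc i mod n}" using assms unfolding CE_def cedge_def by auto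
  have "Suc i mod n < n" using i(1) by simp
  then show ?thesis using i by (auto simp: doubleton_eq_iff)
qed

lemma CE_simple: "3 \<le> n \<Longrightarrow> simple_graph {..<n} (CE n)"
  unfolding simple_graph_def
proof (intro conjI ballI)
  fix e assume n: "3 \<le> n" and e: "e \<in> CE n"
  then obtain i where i: "i < n" "e = {i, Suc i mod n}" unfolding CE_def cedge_def by auto
  have "Suc i mod n < n" using i(1) by simp
  moreover have "i \<noteq> Suc i mod n" using i(1) n by (auto simp: mod_if)
  ultimately show "\<exists>u v. u \<in> {..<n} \<and> v \<in> {..<n} \<and> u \<noteq> v \<and> e = {u, v}" using i by blast
qed simp

lemma path_to_0:
  assumes "\<And>i. Suc i < n \<Longrightarrow> {i, Suc i} \<in> F" "j < n"
  shows "(\<lambda>x y. {x,y} \<in> F)\<^sup>*\<^sup>* j 0"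
  using assms(2)
proof (induction j)
  case 0 then show ?case by simp
next
  case (Suc j)
  have "{Suc j, j} \<in> F" using assms(1)[OF Suc.prems] by (simp add: insert_commute)
  then have "(\<lambda>x y. {x,y} \<in> F) (Suc j) j" by simp
  moreover have "(\<lambda>x y. {x,y} \<in> F)\<^sup>*\<^sup>* j 0" using Suc.IH Suc.prems by simp
  ultimately show ?case by (rule converse_rtranclp_into_rtranclp)
qed

lemma path_conn:
  assumes "\<And>i. Suc i < n \<Longrightarrow> {i, Suc i} \<in> F" "0 < n"
  shows "graph_connected {..<n} F"
  by (rule conn_root[of 0]) (use assms path_to_0[OF assms(1)] in auto)

lemma CE_path: "Suc i < n \<Longrightarrow> {i, Suc i} \<in> CE n"
  unfolding CE_def using cedge_lt[of i n] by (metis Suc_lessD image_eqI lessThan_iff)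

lemma CE_conn: "3 \<le> n \<Longrightarrow> graph_connected {..<n} (CE n)"
  by (rule path_conn) (use CE_path in auto)

lemma cycle_edges_upt: "cycle_edges [0..<n] = CE n"
proof -
  have "cyc_edge [0..<n] i = cedge n i" if "i < n" for i
  proof -
    have "(i + 1) mod n < n" using that by simp
    then show ?thesis unfolding cyc_edge_def cedge_def using that by simp
  qed
  then have "cyc_edge [0..<n] ` {..<n} = cedge n ` {..<n}" by (intro image_cong) auto
  then show ?thesis unfolding cycle_edges_eq CE_def by simp
qed

lemma is_cycle_upt: "3 \<le> n \<Longrightarrow> is_cycle (CE n) [0..<n]"
  unfolding is_cycle_def using cycle_edges_upt by simp

lemma cycle_CE_covers:
  assumes n: "3 \<le> n" and cyc: "is_cycle (CE n) vs"
  shows "set vs = {..<n}"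
proof -
  let ?L = "length vs"
  have L: "3 \<le> ?L" "distinct vs" "cycle_edges vs \<subseteq> CE n" using cyc unfolding is_cycle_def by auto
  have L0: "0 < ?L" using L(1) by linarith
  have ce: "{vs!i, vs!((i+1) mod ?L)} \<in> CE n" if "i < ?L" for i
  proof -
    have "cyc_edge vs i \<in> cycle_edges vs" unfolding cycle_edges_eq using that by simp
    then show ?thesis using L(3) unfolding cyc_edge_def by blast
  qed
  have sub: "set vs \<subseteq> {..<n}"
  proof
    fix x assume "x \<in> set vs"
    then obtain i where i: "i < ?L" "vs!i = x" by (auto simp: in_set_conv_nth)
    show "x \<in> {..<n}" using CE_mem[OF ce[OF i(1)]] i(2) by simp
  qed
  have clos: "Suc x mod n \<in> set vs" if x: "x \<in> set vs" for x
  proof -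
    obtain i where i: "i < ?L" "vs!i = x" using x by (auto simp: in_set_conv_nth)
    define ip where "ip = (i + ?L - 1) mod ?L"
    have ip_eq: "ip = (if i = 0 then ?L - 1 else i - 1)"
    proof (cases "i = 0")
      case True then show ?thesis unfolding ip_def using L0 by simp
    next
      case False then have h: "i + ?L - 1 = (i - 1) + ?L" by simp
      have "(i - 1 + ?L) mod ?L = (i - 1) mod ?L" by simp
      also have "\<dots> = i - 1" using i(1) by simp
      finally show ?thesis unfolding ip_def using False h by simp
    qed
    have iq_eq: "(i+1) mod ?L = (if i + 1 < ?L then i + 1 else 0)"
      using i(1) by (simp add: mod_if)
    have ipL: "ip < ?L" using ip_eq i(1) L(1) by (cases "i = 0") auto
    have ip1: "(ip + 1) mod ?L = i" using ip_eq i(1) L(1) by (cases "i = 0") auto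
    have iqL: "(i+1) mod ?L < ?L" using L0 by simp
    have neq: "ip \<noteq> (i+1) mod ?L" using ip_eq iq_eq i(1) L(1) by (cases "i = 0"; cases "i + 1 < ?L") auto
    let ?p = "vs!ip" and ?q = "vs!((i+1) mod ?L)"
    have pq: "?p \<noteq> ?q" using nth_eq_iff_index_eq[OF L(2) ipL iqL] neq by simp
    have e1: "{x, ?q} \<in> CE n" using ce[OF i(1)] i(2) by simp
    have e2: "{?p, x} \<in> CE n" using ce[OF ipL] ip1 i(2) by simp
    from CE_mem[OF e1] have h1: "x < n" "?q < n" "?q = Suc x mod n \<or> x = Suc ?q mod n" by auto
    from CE_mem[OF e2] have h2: "?p < n" "x = Suc ?p mod n \<or> ?p = Suc x mod n" by auto
    have "?q = Suc x mod n \<or> ?p = Suc x mod n"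
    proof (rule ccontr)
      assume "\<not> ?thesis"
      then have "Suc ?q mod n = Suc ?p mod n" using h1 h2 by auto
      then have "?q = ?p" using suc_mod_inj h1 h2 by blast
      then show False using pq by simp
    qed
    moreover have "?q \<in> set vs" using iqL by simp
    moreover have "?p \<in> set vs" using ipL by simp
    ultimately show ?thesis by auto
  qed
  obtain x0 where x0: "x0 \<in> set vs" using L0 by (metis nth_mem)
  have all: "(x0 + j) mod n \<in> set vs" for j
  proof (induction j)
    case 0 then show ?case using x0 sub by auto
  next
    case (Suc j)
    have "Suc ((x0 + j) mod n) mod n = (x0 + Suc j) mod n" by (simp add: mod_Suc_eq)
    then show ?case using clos[OF Suc.IH] by simp
  qed
  have "{..<n} \<subseteq> set vs"
  proof
    fix y assume y: "y \<in> {..<n}"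
    have x0n: "x0 < n" using x0 sub by auto
    have "(x0 + (y + n - x0)) mod n = y" using y x0n by simp
    then show "y \<in> set vs" using all[of "y + n - x0"] by simp
  qed
  then show ?thesis using sub by auto
qed

definition cid :: "nat \<Rightarrow> nat set \<Rightarrow> nat" where
  "cid n e = (if e = cedge n (n - 1) then n - 1 else Min e)"

lemma cid_cedge:
  assumes n: "3 \<le> n" and i: "i < n" shows "cid n (cedge n i) = i"
proof (cases "i = n - 1")
  case True then show ?thesis unfolding cid_def by simp
next
  case False
  then have "cedge n i \<noteq> cedge n (n - 1)" using inj_onD[OF cedge_inj[OF n]] i n by force
  moreover have "cedge n i = {i, Suc i}" using cedge_lt False i by simp
  ultimately show ?thesis unfolding cid_def by simp
qed

lemma crx_C:
  assumes n: "3 \<le> n" and k: "1 \<le> k" "k \<le> n"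
  shows "crx k {..<n} (CE n) = n"
  unfolding crx_def
proof (rule Least_equality)
  have col: "colouring (CE n) n (cid n)" unfolding colouring_def CE_def using cid_cedge[OF n] by auto
  have rb: "rainbow (cid n) (cycle_edges [0..<n])" unfolding rainbow_def cycle_edges_upt CE_def
    by (auto simp: inj_on_def cid_cedge[OF n])
  show "\<exists>c. colouring (CE n) n c \<and> (\<forall>S. S \<subseteq> {..<n} \<and> card S = k \<longrightarrow>
         (\<exists>vs. is_cycle (CE n) vs \<and> S \<subseteq> set vs \<and> rainbow c (cycle_edges vs)))"
    using col rb is_cycle_upt[OF n] by (intro exI[of _ "cid n"]) (auto intro!: exI[of _ "[0..<n]"])
next
  fix m assume "\<exists>c. colouring (CE n) m c \<and> (\<forall>S. S \<subseteq> {..<n} \<and> card S = k \<longrightarrow>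
         (\<exists>vs. is_cycle (CE n) vs \<and> S \<subseteq> set vs \<and> rainbow c (cycle_edges vs)))"
  then obtain c where c: "colouring (CE n) m c" and P: "\<forall>S. S \<subseteq> {..<n} \<and> card S = k \<longrightarrow>
         (\<exists>vs. is_cycle (CE n) vs \<and> S \<subseteq> set vs \<and> rainbow c (cycle_edges vs))" by blast
  obtain S where S: "S \<subseteq> {..<n}" "card S = k" using obtain_subset_with_card_n[of k "{..<n}"] k by auto
  then obtain vs where vs: "is_cycle (CE n) vs" "rainbow c (cycle_edges vs)" using P by blast
  have "set vs = {..<n}" by (rule cycle_CE_covers[OF n vs(1)])
  then have "length vs = n" using vs(1) distinct_card[of vs] unfolding is_cycle_def by simp
  then have "card (cycle_edges vs) = n" using card_cycle_edges[OF vs(1)] by simp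
  moreover have "cycle_edges vs \<subseteq> CE n" using vs(1) unfolding is_cycle_def by simp
  ultimately show "n \<le> m" using rainbow_card_le[OF vs(2) c] by simp
qed

lemma kcyc_C: "3 \<le> n \<Longrightarrow> k_cyclic k {..<n} (CE n)"
  unfolding k_cyclic_def using is_cycle_upt by (auto intro!: exI[of _ "[0..<n]"])



lemma sep:
  assumes n: "3 \<le> n" and TE: "TE \<subseteq> CE n" and ab: "a < b" "b < n"
    and ma: "cedge n a \<notin> TE" and mb: "cedge n b \<notin> TE"
    and path: "(\<lambda>x y. {x,y} \<in> TE)\<^sup>*\<^sup>* s t" and s: "a < s \<and> s \<le> b"
  shows "a < t \<and> t \<le> b"
  using path s
proof (induction rule: rtranclp_induct)
  case base then show ?case by simp
next
  case (step y z)
  have yz: "{y,z} \<in> TE" using step(2) by simp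
  then obtain i where i: "i < n" "{y,z} = cedge n i" using TE unfolding CE_def by auto
  have ia: "i \<noteq> a" using ma yz i(2) by auto
  have ib: "i \<noteq> b" using mb yz i(2) by auto
  have y: "a < y \<and> y \<le> b" using step.IH step.prems by simp
  show ?case
  proof (cases "Suc i < n")
    case True
    then have "{y,z} = {i, Suc i}" using i cedge_lt by simp
    then have "(y = i \<and> z = Suc i) \<or> (y = Suc i \<and> z = i)" by (auto simp: doubleton_eq_iff)
    then show ?thesis using y ia ib by auto
  next
    case False
    then have ii: "i = n - 1" using i by simp
    then have "{y,z} = {n-1, 0}" using i cedge_last[of n] n by simp
    then have "(y = n-1 \<and> z = 0) \<or> (y = 0 \<and> z = n-1)" by (auto simp: doubleton_eq_iff)
    then show ?thesis using y ib ab ii by auto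
  qed
qed

lemma miss2:
  assumes n: "3 \<le> n" and TE: "TE \<subseteq> CE n" and conn: "graph_connected TV TE"
    and xy: "x < n" "y < n" "x \<noteq> y" "x \<in> TV" "y \<in> TV"
    and mx: "cedge n x \<notin> TE" and my: "cedge n y \<notin> TE"
  shows False
proof -
  have gen: False if "a < b" "b < n" "a \<in> TV" "b \<in> TV" "cedge n a \<notin> TE" "cedge n b \<notin> TE" for a b
  proof -
    have "(\<lambda>x y. {x,y} \<in> TE)\<^sup>*\<^sup>* b a" using conn that(3,4) unfolding graph_connected_def by blast
    from sep[OF n TE that(1,2,5,6) this] that(1) show False by simp
  qed
  show False
  proof (cases "x < y")
    case True then show ?thesis using gen[of x y] xy mx my by blast
  next
    case False then have "y < x" using xy(3) by simp
    then show ?thesis using gen[of y x] xy mx my by blast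
  qed
qed

lemma pig2:
  fixes g :: "'a \<Rightarrow> 'b"
  assumes A: "finite A" and gB: "g ` A \<subseteq> B" and B: "finite B" and c: "card B + 2 \<le> card A"
  shows "(\<exists>x\<in>A. \<exists>y\<in>A. \<exists>z\<in>A. x \<noteq> y \<and> x \<noteq> z \<and> y \<noteq> z \<and> g x = g y \<and> g x = g z) \<or>
         (\<exists>a1\<in>A. \<exists>a2\<in>A. \<exists>b1\<in>A. \<exists>b2\<in>A. distinct [a1,a2,b1,b2] \<and> g a1 = g a2 \<and> g b1 = g b2 \<and> g a1 \<noteq> g b1)"
proof -
  have "\<not> inj_on g A"
  proof
    assume "inj_on g A"
    then have "card A \<le> card B" using card_inj_on_le[OF _ gB B] by simp
    then show False using c by simp
  qed
  then obtain a1 a2 where a: "a1 \<in> A" "a2 \<in> A" "a1 \<noteq> a2" "g a1 = g a2" unfolding inj_on_def by blast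
  define A' where "A' = A - {a1, a2}"
  have cA': "card A' = card A - 2" unfolding A'_def using a A by (simp add: card_Diff_subset)
  show ?thesis
  proof (cases "\<exists>z\<in>A'. g z = g a1")
    case True
    then obtain z where "z \<in> A'" "g z = g a1" by blast
    then have "\<exists>x\<in>A. \<exists>y\<in>A. \<exists>z\<in>A. x \<noteq> y \<and> x \<noteq> z \<and> y \<noteq> z \<and> g x = g y \<and> g x = g z"
      using a unfolding A'_def by (intro bexI[of _ a1] bexI[of _ a2] bexI[of _ z]) auto
    then show ?thesis by blast
  next
    case False
    have gB': "g ` A' \<subseteq> B - {g a1}" using gB False unfolding A'_def by auto
    have inB: "g a1 \<in> B" using gB a(1) by auto
    have "card (B - {g a1}) = card B - 1" using inB by (rule card_Diff_singleton)
    moreover have "card B > 0" using card_gt_0_iff[of B] B inB by blast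
    ultimately have lt: "card (B - {g a1}) < card A'" using cA' c by simp
    have "\<not> inj_on g A'"
    proof
      assume "inj_on g A'"
      then have "card A' \<le> card (B - {g a1})" using card_inj_on_le[OF _ gB'] B by simp
      then show False using lt by simp
    qed
    then obtain b1 b2 where b: "b1 \<in> A'" "b2 \<in> A'" "b1 \<noteq> b2" "g b1 = g b2" unfolding inj_on_def by blast
    have "g b1 \<noteq> g a1" using False b(1) by blast
    then have "\<exists>a1\<in>A. \<exists>a2\<in>A. \<exists>b1\<in>A. \<exists>b2\<in>A. distinct [a1,a2,b1,b2] \<and> g a1 = g a2 \<and> g b1 = g b2 \<and> g a1 \<noteq> g b1"
      using a b unfolding A'_def by (intro bexI[of _ a1] bexI[of _ a2] bexI[of _ b1] bexI[of _ b2]) auto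
    then show ?thesis by blast
  qed
qed

lemma pig3:
  fixes g :: "'a \<Rightarrow> 'b"
  assumes A: "finite A" and gB: "g ` A \<subseteq> B" and B: "finite B" and c: "card B + 3 \<le> card A"
  shows "(\<exists>x\<in>A. \<exists>y\<in>A. \<exists>z\<in>A. x \<noteq> y \<and> x \<noteq> z \<and> y \<noteq> z \<and> g x = g y \<and> g x = g z) \<or>
         (\<exists>a1\<in>A. \<exists>a2\<in>A. \<exists>b1\<in>A. \<exists>b2\<in>A. \<exists>d1\<in>A. \<exists>d2\<in>A. distinct [a1,a2,b1,b2,d1,d2] \<and> g a1 = g a2 \<and> g b1 = g b2 \<and> g d1 = g d2)"
proof -
  have "card B + 2 \<le> card A" using c by simp
  from pig2[OF A gB B this] show ?thesis
  proof
    assume "\<exists>x\<in>A. \<exists>y\<in>A. \<exists>z\<in>A. x \<noteq> y \<and> x \<noteq> z \<and> y \<noteq> z \<and> g x = g y \<and> g x = g z"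
    then show ?thesis by (rule disjI1)
  next
    assume "\<exists>a1\<in>A. \<exists>a2\<in>A. \<exists>b1\<in>A. \<exists>b2\<in>A. distinct [a1,a2,b1,b2] \<and> g a1 = g a2 \<and> g b1 = g b2 \<and> g a1 \<noteq> g b1"
    then obtain a1 a2 b1 b2 where ab: "a1 \<in> A" "a2 \<in> A" "b1 \<in> A" "b2 \<in> A" "distinct [a1,a2,b1,b2]"
       "g a1 = g a2" "g b1 = g b2" "g a1 \<noteq> g b1" by blast
    define A' where "A' = A - {a1, a2, b1, b2}"
    have "card {a1,a2,b1,b2} = 4" using ab(5) by simp
    then have cA': "card A' = card A - 4" unfolding A'_def using ab(1-4) A by (simp add: card_Diff_subset)
    show ?thesis
    proof (cases "\<exists>z\<in>A'. g z = g a1 \<or> g z = g b1")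
      case True
      then obtain z where z: "z \<in> A'" "g z = g a1 \<or> g z = g b1" by blast
      have "\<exists>x\<in>A. \<exists>y\<in>A. \<exists>z\<in>A. x \<noteq> y \<and> x \<noteq> z \<and> y \<noteq> z \<and> g x = g y \<and> g x = g z"
        using z(2)
      proof
        assume gz: "g z = g a1"
        have z': "z \<in> A" "z \<noteq> a1" "z \<noteq> a2" using z(1) unfolding A'_def by auto
        have "a1 \<noteq> a2" using ab(5) by simp
        then show ?thesis using ab(1,2,6) z' gz by (intro bexI[of _ a1] bexI[of _ a2] bexI[of _ z]) auto
      next
        assume gz: "g z = g b1"
        have z': "z \<in> A" "z \<noteq> b1" "z \<noteq> b2" using z(1) unfolding A'_def by auto
        have "b1 \<noteq> b2" using ab(5) by simp
        then show ?thesis using ab(3,4,7) z' gz by (intro bexI[of _ b1] bexI[of _ b2] bexI[of _ z]) auto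
      qed
      then show ?thesis by (rule disjI1)
    next
      case False
      have gB': "g ` A' \<subseteq> B - {g a1, g b1}"
      proof (rule image_subsetI)
        fix z assume z: "z \<in> A'"
        then have "g z \<noteq> g a1" "g z \<noteq> g b1" using False by blast+
        moreover have "g z \<in> B" using z gB unfolding A'_def by blast
        ultimately show "g z \<in> B - {g a1, g b1}" by simp
      qed
      have inB: "g a1 \<in> B" "g b1 \<in> B" using gB ab(1,3) by auto
      then have "card (B - {g a1, g b1}) = card B - 2" using B ab(8) by (simp add: card_Diff_subset)
      moreover have "card {g a1, g b1} \<le> card B" using inB B by (intro card_mono) auto
      then have "card B \<ge> 2" using ab(8) by simp
      ultimately have lt: "card (B - {g a1, g b1}) < card A'" using cA' c by simp
      have "\<not> inj_on g A'"
      proof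
        assume "inj_on g A'"
        then have "card A' \<le> card (B - {g a1, g b1})" using card_inj_on_le[OF _ gB'] B by simp
        then show False using lt by simp
      qed
      then obtain d1 d2 where d: "d1 \<in> A'" "d2 \<in> A'" "d1 \<noteq> d2" "g d1 = g d2" unfolding inj_on_def by blast
      have d': "d1 \<in> A" "d2 \<in> A" "d1 \<notin> {a1,a2,b1,b2}" "d2 \<notin> {a1,a2,b1,b2}" using d(1,2) unfolding A'_def by simp_all
      have dist: "distinct [a1,a2,b1,b2,d1,d2]" using ab(5) d'(3,4) d(3) by (simp, blast)
      have "\<exists>a1\<in>A. \<exists>a2\<in>A. \<exists>b1\<in>A. \<exists>b2\<in>A. \<exists>d1\<in>A. \<exists>d2\<in>A. distinct [a1,a2,b1,b2,d1,d2] \<and> g a1 = g a2 \<and> g b1 = g b2 \<and> g d1 = g d2"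
      proof -
        have conj: "distinct [a1,a2,b1,b2,d1,d2] \<and> g a1 = g a2 \<and> g b1 = g b2 \<and> g d1 = g d2"
          using dist ab(6,7) d(4) by (intro conjI)
        show ?thesis using conj ab(1-4) d'(1,2)
          by (intro bexI[of _ a1] bexI[of _ a2] bexI[of _ b1] bexI[of _ b2] bexI[of _ d1] bexI[of _ d2]) assumption+
      qed
      then show ?thesis by (rule disjI2)
    qed
  qed
qed

lemma ext_set:
  assumes "finite V" "H \<subseteq> V" "card H \<le> k" "k \<le> card V"
  obtains S where "H \<subseteq> S" "S \<subseteq> V" "card S = k"
proof -
  have fH: "finite H" using assms(1,2) finite_subset by blast
  have "k - card H \<le> card (V - H)" using assms fH by (simp add: card_Diff_subset)
  then obtain T where T: "T \<subseteq> V - H" "card T = k - card H" "finite T" by (rule obtain_subset_with_card_n)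
  have "card (H \<union> T) = card H + card T" using T fH by (intro card_Un_disjoint) auto
  then have "card (H \<union> T) = k" using T(2) assms(3) by simp
  moreover have "H \<subseteq> H \<union> T" "H \<union> T \<subseteq> V" using T assms(2) by auto
  ultimately show ?thesis using that by blast
qed

lemma same_col_not_both:
  assumes n: "3 \<le> n" and rb: "rainbow c TE" and xy: "x < n" "y < n" "x \<noteq> y"
    and g: "c (cedge n x) = c (cedge n y)" and inx: "cedge n x \<in> TE" and iny: "cedge n y \<in> TE"
  shows False
proof -
  have "cedge n x = cedge n y" using rb g inx iny unfolding rainbow_def inj_on_def by blast
  then have "x = y" using inj_onD[OF cedge_inj[OF n]] xy by simp
  then show False using xy by simp
qed

lemma rx_C_lower4:
  assumes n: "4 \<le> n" and k: "4 \<le> k" "k \<le> n" and c: "colouring (CE n) m c" and m: "m + 2 \<le> n"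
    and P: "\<forall>S. S \<subseteq> {..<n} \<and> card S = k \<longrightarrow> (\<exists>TV TE. is_tree_in {..<n} (CE n) TV TE \<and> S \<subseteq> TV \<and> rainbow c TE)"
  shows False
proof -
  have n3: "3 \<le> n" using n by simp
  define g where "g = (\<lambda>i. c (cedge n i))"
  have gB: "g ` {..<n} \<subseteq> {..<m}" using c unfolding colouring_def g_def CE_def by auto
  have tree: "\<exists>TV TE. TE \<subseteq> CE n \<and> graph_connected TV TE \<and> H \<subseteq> TV \<and> rainbow c TE"
    if H: "H \<subseteq> {..<n}" "card H \<le> 4" for H
  proof -
    obtain S where S: "H \<subseteq> S" "S \<subseteq> {..<n}" "card S = k" using ext_set[of "{..<n}" H k] H k by auto
    then obtain TV TE where "is_tree_in {..<n} (CE n) TV TE" "S \<subseteq> TV" "rainbow c TE" using P by blast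
    then show ?thesis using S(1) unfolding is_tree_in_def by blast
  qed
  have cc: "card {..<m} + 2 \<le> card {..<n}" using m by simp
  from pig2[OF finite_lessThan gB finite_lessThan cc]
  have "(\<exists>x\<in>{..<n}. \<exists>y\<in>{..<n}. \<exists>z\<in>{..<n}. x \<noteq> y \<and> x \<noteq> z \<and> y \<noteq> z \<and> g x = g y \<and> g x = g z) \<or>
         (\<exists>a1\<in>{..<n}. \<exists>a2\<in>{..<n}. \<exists>b1\<in>{..<n}. \<exists>b2\<in>{..<n}. distinct [a1,a2,b1,b2] \<and> g a1 = g a2 \<and> g b1 = g b2 \<and> g a1 \<noteq> g b1)" .
  then show False
  proof
    assume "\<exists>x\<in>{..<n}. \<exists>y\<in>{..<n}. \<exists>z\<in>{..<n}. x \<noteq> y \<and> x \<noteq> z \<and> y \<noteq> z \<and> g x = g y \<and> g x = g z"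
    then obtain x y z where xyz: "x < n" "y < n" "z < n" "x \<noteq> y" "x \<noteq> z" "y \<noteq> z" "g x = g y" "g x = g z" by auto
    have "card {x,y,z} = 3" using xyz by simp
    then have "card {x,y,z} \<le> 4" by simp
    then obtain TV TE where T: "TE \<subseteq> CE n" "graph_connected TV TE" "{x,y,z} \<subseteq> TV" "rainbow c TE"
      using tree[of "{x,y,z}"] xyz by auto
    show False
    proof (cases "cedge n x \<in> TE")
      case True
      then have "cedge n y \<notin> TE" "cedge n z \<notin> TE"
        using same_col_not_both[OF n3 T(4)] xyz unfolding g_def by metis+
      then show False using miss2[OF n3 T(1,2)] xyz T(3) by blast
    next
      case False
      show False
      proof (cases "cedge n y \<in> TE")
        case True
        then have "cedge n z \<notin> TE"
          using same_col_not_both[OF n3 T(4)] xyz unfolding g_def by metis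
        then show False using miss2[OF n3 T(1,2)] xyz T(3) False by blast
      next
        case F2: False
        then show False using miss2[OF n3 T(1,2)] xyz T(3) False by blast
      qed
    qed
  next
    assume "\<exists>a1\<in>{..<n}. \<exists>a2\<in>{..<n}. \<exists>b1\<in>{..<n}. \<exists>b2\<in>{..<n}. distinct [a1,a2,b1,b2] \<and> g a1 = g a2 \<and> g b1 = g b2 \<and> g a1 \<noteq> g b1"
    then obtain a1 a2 b1 b2 where ab: "a1 < n" "a2 < n" "b1 < n" "b2 < n" "distinct [a1,a2,b1,b2]" "g a1 = g a2" "g b1 = g b2" by auto
    have "card {a1,a2,b1,b2} = 4" using ab(5) by simp
    then have "card {a1,a2,b1,b2} \<le> 4" by simp
    then obtain TV TE where T: "TE \<subseteq> CE n" "graph_connected TV TE" "{a1,a2,b1,b2} \<subseteq> TV" "rainbow c TE"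
      using tree[of "{a1,a2,b1,b2}"] ab by auto
    obtain ma where ma: "ma \<in> {a1,a2}" "cedge n ma \<notin> TE"
      using same_col_not_both[OF n3 T(4), of a1 a2] ab unfolding g_def by auto
    obtain mb where mb: "mb \<in> {b1,b2}" "cedge n mb \<notin> TE"
      using same_col_not_both[OF n3 T(4), of b1 b2] ab unfolding g_def by auto
    have "ma \<noteq> mb" using ma(1) mb(1) ab(5) by auto
    then show False using miss2[OF n3 T(1,2), of ma mb] ma mb ab T(3) by auto
  qed
qed


lemma six_idx:
  fixes i1 i2 i3 :: nat
  assumes "i1 < 6" "i2 < 6" "i3 < 6" "i1 \<noteq> i2" "i1 \<noteq> i3" "i2 \<noteq> i3"
  shows "\<exists>p q e. (p = i1 \<or> p = i2 \<or> p = i3) \<and> (q = i1 \<or> q = i2 \<or> q = i3) \<and> (e = 2 \<or> e = (4::nat)) \<and> p < e \<and> e \<le> q"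
proof -
  define p where "p = min i1 (min i2 i3)"
  define q where "q = max i1 (max i2 i3)"
  have p: "p = i1 \<or> p = i2 \<or> p = i3" unfolding p_def min_def by auto
  have q: "q = i1 \<or> q = i2 \<or> q = i3" unfolding q_def max_def by auto
  have pq: "p + 2 \<le> q" "p < 4" unfolding p_def q_def using assms by (auto simp: min_def max_def)
  show ?thesis
  proof (cases "p < 2")
    case True then show ?thesis using p q pq by (intro exI[of _ p] exI[of _ q] exI[of _ 2]) auto
  next
    case False then show ?thesis using p q pq by (intro exI[of _ p] exI[of _ q] exI[of _ 4]) auto
  qed
qed

lemma rx_C_lower3:
  assumes n: "5 \<le> n" and c: "colouring (CE n) m c" and m: "m + 3 \<le> n"
    and P: "\<forall>S. S \<subseteq> {..<n} \<and> card S = 3 \<longrightarrow> (\<exists>TV TE. is_tree_in {..<n} (CE n) TV TE \<and> S \<subseteq> TV \<and> rainbow c TE)"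
  shows False
proof -
  have n3: "3 \<le> n" using n by simp
  define g where "g = (\<lambda>i. c (cedge n i))"
  have gB: "g ` {..<n} \<subseteq> {..<m}" using c unfolding colouring_def g_def CE_def by auto
  have tree: "\<exists>TV TE. TE \<subseteq> CE n \<and> graph_connected TV TE \<and> S \<subseteq> TV \<and> rainbow c TE"
    if S: "S \<subseteq> {..<n}" "card S = 3" for S
  proof -
    obtain TV TE where "is_tree_in {..<n} (CE n) TV TE" "S \<subseteq> TV" "rainbow c TE" using P S by blast
    then show ?thesis unfolding is_tree_in_def by blast
  qed
  have cc: "card {..<m} + 3 \<le> card {..<n}" using m by simp
  from pig3[OF finite_lessThan gB finite_lessThan cc]
  show False
  proof
    assume "\<exists>x\<in>{..<n}. \<exists>y\<in>{..<n}. \<exists>z\<in>{..<n}. x \<noteq> y \<and> x \<noteq> z \<and> y \<noteq> z \<and> g x = g y \<and> g x = g z"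
    then obtain x y z where xyz: "x < n" "y < n" "z < n" "x \<noteq> y" "x \<noteq> z" "y \<noteq> z" "g x = g y" "g x = g z" by auto
    have "card {x,y,z} = 3" using xyz by simp
    then obtain TV TE where T: "TE \<subseteq> CE n" "graph_connected TV TE" "{x,y,z} \<subseteq> TV" "rainbow c TE"
      using tree[of "{x,y,z}"] xyz by auto
    show False
    proof (cases "cedge n x \<in> TE")
      case True
      then have "cedge n y \<notin> TE" "cedge n z \<notin> TE"
        using same_col_not_both[OF n3 T(4)] xyz unfolding g_def by metis+
      then show False using miss2[OF n3 T(1,2)] xyz T(3) by blast
    next
      case False
      show False
      proof (cases "cedge n y \<in> TE")
        case True
        then have "cedge n z \<notin> TE"
          using same_col_not_both[OF n3 T(4)] xyz unfolding g_def by metis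
        then show False using miss2[OF n3 T(1,2)] xyz T(3) False by blast
      next
        case F2: False
        then show False using miss2[OF n3 T(1,2)] xyz T(3) False by blast
      qed
    qed
  next
    assume "\<exists>a1\<in>{..<n}. \<exists>a2\<in>{..<n}. \<exists>b1\<in>{..<n}. \<exists>b2\<in>{..<n}. \<exists>d1\<in>{..<n}. \<exists>d2\<in>{..<n}. distinct [a1,a2,b1,b2,d1,d2] \<and> g a1 = g a2 \<and> g b1 = g b2 \<and> g d1 = g d2"
    then obtain a1 a2 b1 b2 d1 d2 where ab: "a1 < n" "a2 < n" "b1 < n" "b2 < n" "d1 < n" "d2 < n"
      "distinct [a1,a2,b1,b2,d1,d2]" "g a1 = g a2" "g b1 = g b2" "g d1 = g d2" by auto
    define D where "D = {a1,a2,b1,b2,d1,d2}"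
    have cD: "card D = 6" unfolding D_def using ab(7) by simp
    have Dn: "D \<subseteq> {..<n}" unfolding D_def using ab(1-6) by auto
    obtain ds where ds: "sorted_wrt (<) ds" "set ds = D"
      using ex1_sorted_list_for_set_if_finite[of D] unfolding D_def by auto
    have dds: "distinct ds" using ds(1) strict_sorted_iff by blast
    have lds: "length ds = 6" using distinct_card[OF dds] ds(2) cD by simp
    define S where "S = {ds!0, ds!2, ds!4}"
    have "ds!0 \<noteq> ds!2" "ds!0 \<noteq> ds!4" "ds!2 \<noteq> ds!4"
      using nth_eq_iff_index_eq[OF dds] lds by auto
    then have cS: "card S = 3" unfolding S_def by simp
    have inD: "ds!i \<in> D" if "i < 6" for i using ds(2) lds that nth_mem by metis
    have Sn: "S \<subseteq> {..<n}" unfolding S_def using inD[of 0] inD[of 2] inD[of 4] Dn by auto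
    obtain TV TE where T: "TE \<subseteq> CE n" "graph_connected TV TE" "S \<subseteq> TV" "rainbow c TE"
      using tree[OF Sn cS] by auto
    obtain ma where ma: "ma \<in> {a1,a2}" "cedge n ma \<notin> TE"
      using same_col_not_both[OF n3 T(4), of a1 a2] ab unfolding g_def by auto
    obtain mb where mb: "mb \<in> {b1,b2}" "cedge n mb \<notin> TE"
      using same_col_not_both[OF n3 T(4), of b1 b2] ab unfolding g_def by auto
    obtain md where md: "md \<in> {d1,d2}" "cedge n md \<notin> TE"
      using same_col_not_both[OF n3 T(4), of d1 d2] ab unfolding g_def by auto
    have dist: "ma \<noteq> mb" "ma \<noteq> md" "mb \<noteq> md" using ma(1) mb(1) md(1) ab(7) by auto
    have mD: "ma \<in> set ds" "mb \<in> set ds" "md \<in> set ds" using ma(1) mb(1) md(1) ds(2) unfolding D_def by auto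
    obtain ia where ia: "ia < 6" "ds!ia = ma" using mD(1) lds by (metis in_set_conv_nth)
    obtain ib where ib: "ib < 6" "ds!ib = mb" using mD(2) lds by (metis in_set_conv_nth)
    obtain ic where ic: "ic < 6" "ds!ic = md" using mD(3) lds by (metis in_set_conv_nth)
    have "ia \<noteq> ib" "ia \<noteq> ic" "ib \<noteq> ic" using ia ib ic dist by auto
    then obtain p q e where pqe: "p = ia \<or> p = ib \<or> p = ic" "q = ia \<or> q = ib \<or> q = ic"
      "e = 2 \<or> e = 4" "p < e" "e \<le> q"
      using six_idx[OF ia(1) ib(1) ic(1)] by blast
    have pq6: "p < 6" "q < 6" using pqe(1,2) ia ib ic by auto
    have mp: "cedge n (ds!p) \<notin> TE" using pqe(1) ia ib ic ma mb md by auto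
    have mq: "cedge n (ds!q) \<notin> TE" using pqe(2) ia ib ic ma mb md by auto
    have lt1: "ds!p < ds!e" using sorted_wrt_nth_less[OF ds(1) pqe(4)] pq6 pqe(5) lds by simp
    have le2: "ds!e \<le> ds!q"
    proof (cases "e = q")
      case True then show ?thesis by simp
    next
      case False then have "e < q" using pqe(5) by simp
      then show ?thesis using sorted_wrt_nth_less[OF ds(1)] pq6 lds by fastforce
    qed
    have le0: "ds!0 \<le> ds!p"
    proof (cases "p = 0")
      case True then show ?thesis by simp
    next
      case False then show ?thesis using sorted_wrt_nth_less[OF ds(1), of 0 p] pq6 lds by simp
    qed
    have qn: "ds!q < n" using inD[OF pq6(2)] Dn by auto
    have eS: "ds!e \<in> S" unfolding S_def using pqe(3) by auto
    have zS: "ds!0 \<in> S" unfolding S_def by auto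
    have "(\<lambda>x y. {x,y} \<in> TE)\<^sup>*\<^sup>* (ds!e) (ds!0)" using T(2,3) eS zS unfolding graph_connected_def by blast
    from sep[OF n3 T(1) order.strict_trans2[OF lt1 le2] qn mp mq this] lt1 le2 le0
    show False by simp
  qed
qed



lemma path_fw:
  assumes e: "\<And>i. lo \<le> i \<Longrightarrow> Suc i \<le> hi \<Longrightarrow> {i, Suc i} \<in> F" and j: "lo \<le> j" "j \<le> hi"
  shows "(\<lambda>x y. {x,y} \<in> F)\<^sup>*\<^sup>* lo j"
  using j
proof (induction j)
  case 0 then show ?case by simp
next
  case (Suc j)
  show ?case
  proof (cases "lo = Suc j")
    case True then show ?thesis by simp
  next
    case False
    then have lj: "lo \<le> j" using Suc.prems by simp
    have "(\<lambda>x y. {x,y} \<in> F)\<^sup>*\<^sup>* lo j" using Suc.IH lj Suc.prems(2) by simp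
    moreover have "{j, Suc j} \<in> F" using e[OF lj Suc.prems(2)] .
    ultimately show ?thesis by (simp add: rtranclp.rtrancl_into_rtrancl)
  qed
qed

lemma cedge_sub: "i < n \<Longrightarrow> cedge n i \<subseteq> {..<n}"
  unfolding cedge_def by simp

lemma CE_cedge: "i < n \<Longrightarrow> cedge n i \<in> CE n"
  unfolding CE_def by simp

definition c4 :: "nat \<Rightarrow> nat set \<Rightarrow> nat" where
  "c4 n e = min (cid n e) (n - 2)"

lemma rx_C4:
  assumes n: "4 \<le> n" and k: "4 \<le> k" "k \<le> n"
  shows "rx k {..<n} (CE n) = n - 1"
proof -
  have n3: "3 \<le> n" using n by simp
  have "k \<noteq> 1" using k by simp
  then have "rx k {..<n} (CE n) = (LEAST m. \<exists>c. colouring (CE n) m c \<and>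
      (\<forall>S. S \<subseteq> {..<n} \<and> card S = k \<longrightarrow>
         (\<exists>TV TE. is_tree_in {..<n} (CE n) TV TE \<and> S \<subseteq> TV \<and> rainbow c TE)))" unfolding rx_def by simp
  also have "\<dots> = n - 1"
  proof (rule Least_equality)
    define TE where "TE = cedge n ` {..<n - 1}"
    have inj: "inj_on (cedge n) {..<n - 1}" using inj_on_subset[OF cedge_inj[OF n3]] by auto
    have tree: "is_tree_in {..<n} (CE n) {..<n} TE"
    proof (rule tree_intro)
      show "{..<n} \<subseteq> {..<n}" by simp
      show "TE \<subseteq> CE n" unfolding TE_def CE_def by auto
      show "\<forall>e\<in>TE. e \<subseteq> {..<n}" unfolding TE_def using cedge_sub by auto
      show "graph_connected {..<n} TE"
      proof (rule path_conn)
        fix i assume "Suc i < n"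
        then have "cedge n i = {i, Suc i}" "i \<in> {..<n - 1}" using cedge_lt by auto
        then show "{i, Suc i} \<in> TE" unfolding TE_def by force
      qed (use n in simp)
      show "finite TE" unfolding TE_def by simp
      show "card TE < card {..<n}" unfolding TE_def using card_image[OF inj] n by simp
    qed
    have c4i: "c4 n (cedge n i) = i" if "i < n - 1" for i
      unfolding c4_def using cid_cedge[OF n3, of i] that by simp
    have rb: "rainbow (c4 n) TE" unfolding rainbow_def TE_def
      by (auto simp: inj_on_def c4i)
    have col: "colouring (CE n) (n - 1) (c4 n)" unfolding colouring_def c4_def using n by auto
    show "\<exists>c. colouring (CE n) (n - 1) c \<and> (\<forall>S. S \<subseteq> {..<n} \<and> card S = k \<longrightarrow>
         (\<exists>TV TE. is_tree_in {..<n} (CE n) TV TE \<and> S \<subseteq> TV \<and> rainbow c TE))"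
      using col tree rb by blast
  next
    fix m assume "\<exists>c. colouring (CE n) m c \<and> (\<forall>S. S \<subseteq> {..<n} \<and> card S = k \<longrightarrow>
         (\<exists>TV TE. is_tree_in {..<n} (CE n) TV TE \<and> S \<subseteq> TV \<and> rainbow c TE))"
    then obtain c where c: "colouring (CE n) m c" and P: "\<forall>S. S \<subseteq> {..<n} \<and> card S = k \<longrightarrow>
         (\<exists>TV TE. is_tree_in {..<n} (CE n) TV TE \<and> S \<subseteq> TV \<and> rainbow c TE)" by blast
    show "n - 1 \<le> m"
    proof (rule ccontr)
      assume "\<not> n - 1 \<le> m"
      then have "m + 2 \<le> n" by simp
      then show False using rx_C_lower4[OF n k c _ P] by simp
    qed
  qed
  finally show ?thesis .
qed

definition g3 :: "nat \<Rightarrow> nat" where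
  "g3 i = (if i = 0 \<or> i = 2 then 0 else if i = 1 \<or> i = 3 then 1 else i - 2)"

definition c3 :: "nat \<Rightarrow> nat set \<Rightarrow> nat" where
  "c3 n e = g3 (cid n e)"

lemma tree3_v:
  assumes n: "5 \<le> n" and v: "v \<in> {1,2,3}"
  shows "is_tree_in {..<n} (CE n) ({..<n} - {v}) (cedge n ` ({..<n} - {v - 1, v}))
       \<and> rainbow (c3 n) (cedge n ` ({..<n} - {v - 1, v}))"
proof -
  have n3: "3 \<le> n" using n by simp
  define I where "I = {..<n} - {v - 1, v}"
  define TE where "TE = cedge n ` I"
  have v1: "1 \<le> v" "v \<le> 3" using v by auto
  have inj: "inj_on (cedge n) I" unfolding I_def using inj_on_subset[OF cedge_inj[OF n3]] by auto
  have cI: "card I = n - 2"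
  proof -
    have "{v - 1, v} \<subseteq> {..<n}" using v1 n by auto
    moreover have "card {v - 1, v} = 2" using v1 by simp
    ultimately show ?thesis unfolding I_def by (simp add: card_Diff_subset)
  qed
  have inTE: "{i, Suc i} \<in> TE" if "Suc i < n" "i \<noteq> v - 1" "i \<noteq> v" for i
  proof -
    have "cedge n i = {i, Suc i}" using cedge_lt that(1) by simp
    moreover have "i \<in> I" unfolding I_def using that by auto
    ultimately show ?thesis unfolding TE_def by force
  qed
  have tree: "is_tree_in {..<n} (CE n) ({..<n} - {v}) TE"
  proof (rule tree_intro)
    show "{..<n} - {v} \<subseteq> {..<n}" by auto
    show "TE \<subseteq> CE n" unfolding TE_def I_def CE_def by auto
    show "\<forall>e\<in>TE. e \<subseteq> {..<n} - {v}"
    proof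
      fix e assume "e \<in> TE"
      then obtain i where i: "i \<in> I" "e = cedge n i" unfolding TE_def by auto
      have il: "i < n" "i \<noteq> v" "i \<noteq> v - 1" using i(1) unfolding I_def by auto
      have "Suc i mod n \<noteq> v"
      proof (cases "Suc i < n")
        case True then show ?thesis using il v1 by simp
      next
        case False then have "Suc i = n" using il by simp
        then show ?thesis using v1 by simp
      qed
      then show "e \<subseteq> {..<n} - {v}" using i(2) cedge_sub[OF il(1)] il unfolding cedge_def by auto
    qed
    show "graph_connected ({..<n} - {v}) TE"
    proof (rule conn_root[of 0])
      show "0 \<in> {..<n} - {v}" using v1 n by auto
      fix u assume u: "u \<in> {..<n} - {v}"
      show "(\<lambda>x y. {x,y} \<in> TE)\<^sup>*\<^sup>* u 0"
      proof (cases "u < v")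
        case True
        show ?thesis
        proof (rule path_to_0[of v])
          fix i assume "Suc i < v"
          then show "{i, Suc i} \<in> TE" using inTE[of i] v1 n by simp
        qed (use True in simp)
      next
        case False
        then have uv: "v + 1 \<le> u" "u \<le> n - 1" using u by auto
        have e: "{i, Suc i} \<in> TE" if "v + 1 \<le> i" "Suc i \<le> n - 1" for i
          using inTE[of i] that by simp
        have p1: "(\<lambda>x y. {x,y} \<in> TE)\<^sup>*\<^sup>* (v + 1) u" by (rule path_fw[OF e uv]) simp_all
        have vn: "v + 1 \<le> n - 1" using n v1 by simp
        have p2: "(\<lambda>x y. {x,y} \<in> TE)\<^sup>*\<^sup>* (v + 1) (n - 1)" using path_fw[OF e vn order.refl] .
        have "cedge n (n - 1) = {n - 1, 0}" using cedge_last[of n] n by simp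
        moreover have "n - 1 \<in> I" unfolding I_def using n v1 by auto
        ultimately have "{n - 1, 0} \<in> TE" unfolding TE_def by force
        then have p3: "(\<lambda>x y. {x,y} \<in> TE) (n - 1) 0" by simp
        have "(\<lambda>x y. {x,y} \<in> TE)\<^sup>*\<^sup>* u (v + 1)" by (rule rtranclp_edge_sym[OF p1])
        also have "(\<lambda>x y. {x,y} \<in> TE)\<^sup>*\<^sup>* (v + 1) (n - 1)" by (rule p2)
        also have "(\<lambda>x y. {x,y} \<in> TE)\<^sup>*\<^sup>* (n - 1) 0" using p3 by (rule r_into_rtranclp)
        finally show ?thesis .
      qed
    qed
    show "finite TE" unfolding TE_def I_def by simp
    have "card TE = n - 2" unfolding TE_def using card_image[OF inj] cI by simp
    moreover have "card ({..<n} - {v}) = n - 1" using v1 n by (simp add: card_Diff_singleton)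
    ultimately show "card TE < card ({..<n} - {v})" using n by simp
  qed
  have g3inj: "inj_on g3 I"
  proof (rule inj_onI)
    fix i j assume i: "i \<in> I" and j: "j \<in> I" and eq: "g3 i = g3 j"
    have ii: "i \<noteq> v - 1" "i \<noteq> v" "j \<noteq> v - 1" "j \<noteq> v" using i j unfolding I_def by auto
    show "i = j"
    proof (cases "4 \<le> i")
      case True
      show ?thesis
      proof (cases "4 \<le> j")
        case True then show ?thesis using \<open>4 \<le> i\<close> eq unfolding g3_def by simp
      next
        case False
        have "g3 j \<le> 1" using False unfolding g3_def by simp
        moreover have "g3 i \<ge> 2" using True unfolding g3_def by simp
        ultimately show ?thesis using eq by simp
      qed
    next
      case False
      show ?thesis
      proof (cases "4 \<le> j")
        case True
        have "g3 i \<le> 1" using False unfolding g3_def by simp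
        moreover have "g3 j \<ge> 2" using True unfolding g3_def by simp
        ultimately show ?thesis using eq by simp
      next
        case F2: False
        have "i \<in> {0,1,2,3}" "j \<in> {0,1,2,3}" using False F2 by auto
        then show ?thesis using eq ii v unfolding g3_def by auto
      qed
    qed
  qed
  have rb: "rainbow (c3 n) TE" unfolding rainbow_def TE_def
  proof (rule inj_onI)
    fix x y assume x: "x \<in> cedge n ` I" and y: "y \<in> cedge n ` I" and eq: "c3 n x = c3 n y"
    obtain i where i: "i \<in> I" "x = cedge n i" using x by auto
    obtain j where j: "j \<in> I" "y = cedge n j" using y by auto
    have "i < n" "j < n" using i j unfolding I_def by auto
    then have "g3 i = g3 j" using eq i j cid_cedge[OF n3] unfolding c3_def by simp
    then have "i = j" using inj_onD[OF g3inj] i j by simp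
    then show "x = y" using i j by simp
  qed
  show ?thesis using tree rb unfolding TE_def I_def by simp
qed

lemma tree3_123:
  assumes n: "5 \<le> n"
  shows "is_tree_in {..<n} (CE n) {1,2,3} {cedge n 1, cedge n 2} \<and> rainbow (c3 n) {cedge n 1, cedge n 2}"
proof -
  have n3: "3 \<le> n" using n by simp
  have e1: "cedge n 1 = {1,2}" using cedge_lt[of 1 n] n by (simp add: numeral_2_eq_2)
  have e2: "cedge n 2 = {2,3}" using cedge_lt[of 2 n] n by (simp add: numeral_2_eq_2 numeral_3_eq_3)
  have tree: "is_tree_in {..<n} (CE n) {1,2,3} {cedge n 1, cedge n 2}"
  proof (rule tree_intro)
    show "{1,2,3} \<subseteq> {..<n}" using n by auto
    show "{cedge n 1, cedge n 2} \<subseteq> CE n" using CE_cedge n by auto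
    show "\<forall>e\<in>{cedge n 1, cedge n 2}. e \<subseteq> {1,2,3}" using e1 e2 by auto
    show "graph_connected {1,2,3} {cedge n 1, cedge n 2}"
    proof (rule conn_root[of 2])
      fix u :: nat assume "u \<in> {1,2,3}"
      then have "u = 1 \<or> u = 2 \<or> u = 3" by auto
      then show "(\<lambda>x y. {x,y} \<in> {cedge n 1, cedge n 2})\<^sup>*\<^sup>* u 2"
      proof (elim disjE)
        assume "u = 1" then show ?thesis using e1 by (intro r_into_rtranclp) simp
      next
        assume "u = 2" then show ?thesis by simp
      next
        assume "u = 3" then show ?thesis using e2 by (intro r_into_rtranclp) (simp add: insert_commute)
      qed
    qed simp
    show "finite {cedge n 1, cedge n 2}" by simp
    have "{1::nat,2} \<noteq> {2,3}" by (auto simp: doubleton_eq_iff)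
    then show "card {cedge n 1, cedge n 2} < card {1::nat,2,3}" using e1 e2 by simp
  qed
  have "c3 n (cedge n 1) = 1" "c3 n (cedge n 2) = 0" unfolding c3_def g3_def using cid_cedge[OF n3] n by simp_all
  then have "rainbow (c3 n) {cedge n 1, cedge n 2}" unfolding rainbow_def inj_on_def by auto
  then show ?thesis using tree by simp
qed

lemma rx_C3:
  assumes n: "5 \<le> n"
  shows "rx 3 {..<n} (CE n) = n - 2"
proof -
  have n3: "3 \<le> n" using n by simp
  have "rx 3 {..<n} (CE n) = (LEAST m. \<exists>c. colouring (CE n) m c \<and>
      (\<forall>S. S \<subseteq> {..<n} \<and> card S = 3 \<longrightarrow>
         (\<exists>TV TE. is_tree_in {..<n} (CE n) TV TE \<and> S \<subseteq> TV \<and> rainbow c TE)))" unfolding rx_def by simp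
  also have "\<dots> = n - 2"
  proof (rule Least_equality)
    have col: "colouring (CE n) (n - 2) (c3 n)"
      unfolding colouring_def
    proof
      fix x assume "x \<in> c3 n ` CE n"
      then obtain i where i: "i < n" "x = c3 n (cedge n i)" unfolding CE_def by auto
      then have "x = g3 i" unfolding c3_def using cid_cedge[OF n3] by simp
      then show "x \<in> {..<n - 2}" using i(1) n unfolding g3_def by auto
    qed
    have P: "\<exists>TV TE. is_tree_in {..<n} (CE n) TV TE \<and> S \<subseteq> TV \<and> rainbow (c3 n) TE"
      if S: "S \<subseteq> {..<n}" "card S = 3" for S
    proof (cases "\<exists>v\<in>{1,2,3}. v \<notin> S")
      case True
      then obtain v where v: "v \<in> {1,2,3}" "v \<notin> S" by blast
      have "S \<subseteq> {..<n} - {v}" using S v by auto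
      then show ?thesis using tree3_v[OF n v(1)] by blast
    next
      case False
      then have sub: "{1,2,3} \<subseteq> S" by auto
      have "finite S" using S(1) finite_subset by blast
      moreover have "card {1::nat,2,3} = card S" using S(2) by simp
      ultimately have "S = {1,2,3}" using sub card_subset_eq by metis
      then show ?thesis using tree3_123[OF n] by blast
    qed
    show "\<exists>c. colouring (CE n) (n - 2) c \<and> (\<forall>S. S \<subseteq> {..<n} \<and> card S = 3 \<longrightarrow>
         (\<exists>TV TE. is_tree_in {..<n} (CE n) TV TE \<and> S \<subseteq> TV \<and> rainbow c TE))"
      using col P by blast
  next
    fix m assume "\<exists>c. colouring (CE n) m c \<and> (\<forall>S. S \<subseteq> {..<n} \<and> card S = 3 \<longrightarrow>
         (\<exists>TV TE. is_tree_in {..<n} (CE n) TV TE \<and> S \<subseteq> TV \<and> rainbow c TE))"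
    then obtain c where c: "colouring (CE n) m c" and P: "\<forall>S. S \<subseteq> {..<n} \<and> card S = 3 \<longrightarrow>
         (\<exists>TV TE. is_tree_in {..<n} (CE n) TV TE \<and> S \<subseteq> TV \<and> rainbow c TE)" by blast
    show "n - 2 \<le> m"
    proof (rule ccontr)
      assume "\<not> n - 2 \<le> m"
      then have "m + 3 \<le> n" by simp
      then show False using rx_C_lower3[OF n c _ P] by simp
    qed
  qed
  finally show ?thesis .
qed



lemma cycle_edges4: "cycle_edges [a,b,c,d] = {{a,b},{b,c},{c,d},{d,a}}"
proof -
  have "{..<length [a,b,c,d]} = {0,1,2,3}" by (simp add: lessThan_Suc numeral_3_eq_3 numeral_2_eq_2 insert_commute)
  moreover have "cyc_edge [a,b,c,d] 0 = {a,b}" "cyc_edge [a,b,c,d] 1 = {b,c}"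
    "cyc_edge [a,b,c,d] 2 = {c,d}" "cyc_edge [a,b,c,d] 3 = {d,a}"
    unfolding cyc_edge_def by simp_all
  ultimately show ?thesis unfolding cycle_edges_eq by simp
qed

lemma cycle_edges3: "cycle_edges [a,b,c] = {{a,b},{b,c},{c,a}}"
proof -
  have "{..<length [a,b,c]} = {0,1,2}" by (simp add: lessThan_Suc numeral_2_eq_2 insert_commute)
  moreover have "cyc_edge [a,b,c] 0 = {a,b}" "cyc_edge [a,b,c] 1 = {b,c}"
    "cyc_edge [a,b,c] 2 = {c,a}"
    unfolding cyc_edge_def by simp_all
  ultimately show ?thesis unfolding cycle_edges_eq by simp
qed

lemma tri_pairs:
  assumes cyc: "is_cycle E vs" and L: "length vs = 3" and x: "x \<in> set vs" and y: "y \<in> set vs" and xy: "x \<noteq> y"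
  shows "{x,y} \<in> E"
proof -
  obtain a b c where abc: "vs = [a,b,c]" using L by (auto simp: length_Suc_conv numeral_3_eq_3)
  have "cycle_edges vs \<subseteq> E" using cyc unfolding is_cycle_def by simp
  then have E: "{a,b} \<in> E" "{b,c} \<in> E" "{c,a} \<in> E" unfolding abc cycle_edges3 by auto
  have "x \<in> {a,b,c}" "y \<in> {a,b,c}" using x y abc by auto
  then show ?thesis using E xy by (auto simp: insert_commute)
qed

definition CPE :: "nat \<Rightarrow> nat set set" where
  "CPE m = {{x, y} | x y. x < 2 * m \<and> y < 2 * m \<and> x div 2 \<noteq> y div 2}"

lemma CP_mem: assumes "{x,y} \<in> CPE m" shows "x < 2 * m \<and> y < 2 * m \<and> x div 2 \<noteq> y div 2"
proof -
  obtain a b where ab: "{x,y} = {a,b}" "a < 2 * m" "b < 2 * m" "a div 2 \<noteq> b div 2"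
    using assms unfolding CPE_def by blast
  then have "(x = a \<and> y = b) \<or> (x = b \<and> y = a)" by (auto simp: doubleton_eq_iff)
  then show ?thesis using ab by auto
qed

lemma CP_edge: "x < 2 * m \<Longrightarrow> y < 2 * m \<Longrightarrow> x div 2 \<noteq> y div 2 \<Longrightarrow> {x,y} \<in> CPE m"
  unfolding CPE_def by blast

lemma CP_simple: "simple_graph {..<2*m} (CPE m)"
  unfolding simple_graph_def
proof (intro conjI ballI)
  fix e assume "e \<in> CPE m"
  then obtain x y where "e = {x,y}" "x < 2 * m" "y < 2 * m" "x div 2 \<noteq> y div 2" unfolding CPE_def by blast
  then show "\<exists>u v. u \<in> {..<2*m} \<and> v \<in> {..<2*m} \<and> u \<noteq> v \<and> e = {u, v}" by auto
qed simp

lemma CP_conn: assumes m: "2 \<le> m" shows "graph_connected {..<2*m} (CPE m)"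
proof (rule conn_root[of 0])
  show "0 \<in> {..<2*m}" using m by simp
  fix u assume u: "u \<in> {..<2*m}"
  show "(\<lambda>x y. {x,y} \<in> CPE m)\<^sup>*\<^sup>* u 0"
  proof (cases "u div 2 = 0")
    case False
    then have "{u, 0} \<in> CPE m" using u m by (intro CP_edge) auto
    then show ?thesis by (intro r_into_rtranclp) simp
  next
    case True
    then have "u = 0 \<or> u = 1" by auto
    then show ?thesis
    proof
      assume "u = 0" then show ?thesis by simp
    next
      assume u1: "u = 1"
      have "{1, 2} \<in> CPE m" "{2, 0} \<in> CPE m" using m by (intro CP_edge; simp)+
      then show ?thesis using u1 by (meson converse_rtranclp_into_rtranclp r_into_rtranclp)
    qed
  qed
qed

definition ccol :: "nat set \<Rightarrow> nat" where
  "ccol e = 2 * (Min e mod 2) + Max e mod 2"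

lemma ccol2: "ccol {a, b} = 2 * (min a b mod 2) + max a b mod 2"
  unfolding ccol_def by simp

lemma CP_cycle:
  assumes ij: "i < m" "j < m" "i \<noteq> j"
  shows "is_cycle (CPE m) [2*i, 2*j, 2*i+1, 2*j+1] \<and> rainbow ccol (cycle_edges [2*i, 2*j, 2*i+1, 2*j+1])"
proof -
  let ?vs = "[2*i, 2*j, 2*i+1, 2*j+1]"
  have E: "{2*i, 2*j} \<in> CPE m" "{2*j, 2*i+1} \<in> CPE m" "{2*i+1, 2*j+1} \<in> CPE m" "{2*j+1, 2*i} \<in> CPE m"
    using ij by (intro CP_edge; simp)+
  have "distinct ?vs" using ij by auto
  then have cyc: "is_cycle (CPE m) ?vs" unfolding is_cycle_def cycle_edges4 using E by simp
  have rb: "inj_on ccol {{2*i, 2*j}, {2*j, 2*i+1}, {2*i+1, 2*j+1}, {2*j+1, 2*i}}"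
  proof (cases "i < j")
    case True
    have "ccol {2*i, 2*j} = 0" "ccol {2*j, 2*i+1} = 2" "ccol {2*i+1, 2*j+1} = 3" "ccol {2*j+1, 2*i} = 1"
      unfolding ccol2 using True by (simp_all add: min_def max_def)
    then show ?thesis unfolding inj_on_def by auto
  next
    case False
    then have "j < i" using ij by simp
    then have "ccol {2*i, 2*j} = 0" "ccol {2*j, 2*i+1} = 1" "ccol {2*i+1, 2*j+1} = 3" "ccol {2*j+1, 2*i} = 2"
      unfolding ccol2 by (simp_all add: min_def max_def)
    then show ?thesis unfolding inj_on_def by auto
  qed
  show ?thesis using cyc rb unfolding rainbow_def cycle_edges4 by simp
qed

lemma CP_P:
  assumes m: "2 \<le> m"
  shows "\<exists>c. colouring (CPE m) 4 c \<and> (\<forall>S. S \<subseteq> {..<2*m} \<and> card S = 2 \<longrightarrow>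
         (\<exists>vs. is_cycle (CPE m) vs \<and> S \<subseteq> set vs \<and> rainbow c (cycle_edges vs)))"
proof -
  have lt: "ccol e < 4" for e
  proof -
    have "Min e mod 2 < 2" "Max e mod 2 < 2" by (rule mod_less_divisor, simp)+
    then show ?thesis unfolding ccol_def by linarith
  qed
  have col: "colouring (CPE m) 4 ccol" unfolding colouring_def
  proof (rule image_subsetI)
    fix e show "ccol e \<in> {..<4}" using lt[of e] by (simp only: lessThan_iff)
  qed
  have P: "\<exists>vs. is_cycle (CPE m) vs \<and> S \<subseteq> set vs \<and> rainbow ccol (cycle_edges vs)"
    if S: "S \<subseteq> {..<2*m}" "card S = 2" for S
  proof -
    obtain u w where uw: "S = {u, w}" "u \<noteq> w" using S(2) by (auto simp: card_2_iff)
    have un: "u < 2*m" "w < 2*m" using S uw by auto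
    define i where "i = u div 2"
    define j where "j = (if w div 2 \<noteq> i then w div 2 else if i = 0 then 1 else 0)"
    have ij: "i < m" "j < m" "i \<noteq> j" unfolding i_def j_def using un m by auto
    have "u \<in> {2*i, 2*i+1}" unfolding i_def by auto
    moreover have "w \<in> {2*i, 2*i+1, 2*j, 2*j+1}"
    proof (cases "w div 2 = i")
      case True then show ?thesis by auto
    next
      case False then have "j = w div 2" unfolding j_def by simp
      then show ?thesis by auto
    qed
    ultimately have "S \<subseteq> set [2*i, 2*j, 2*i+1, 2*j+1]" using uw by auto
    then show ?thesis using CP_cycle[OF ij] by blast
  qed
  show "\<exists>c. colouring (CPE m) 4 c \<and> (\<forall>S. S \<subseteq> {..<2*m} \<and> card S = 2 \<longrightarrow>
         (\<exists>vs. is_cycle (CPE m) vs \<and> S \<subseteq> set vs \<and> rainbow c (cycle_edges vs)))"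
    using col P by blast
qed

lemma crx_CP:
  assumes m: "2 \<le> m"
  shows "crx 2 {..<2*m} (CPE m) = 4"
  unfolding crx_def
proof (rule Least_equality)
  show "\<exists>c. colouring (CPE m) 4 c \<and> (\<forall>S. S \<subseteq> {..<2*m} \<and> card S = 2 \<longrightarrow>
         (\<exists>vs. is_cycle (CPE m) vs \<and> S \<subseteq> set vs \<and> rainbow c (cycle_edges vs)))"
    using CP_P[OF m] .
next
  fix k assume "\<exists>c. colouring (CPE m) k c \<and> (\<forall>S. S \<subseteq> {..<2*m} \<and> card S = 2 \<longrightarrow>
         (\<exists>vs. is_cycle (CPE m) vs \<and> S \<subseteq> set vs \<and> rainbow c (cycle_edges vs)))"
  then obtain c where c: "colouring (CPE m) k c" and P: "\<forall>S. S \<subseteq> {..<2*m} \<and> card S = 2 \<longrightarrow>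
         (\<exists>vs. is_cycle (CPE m) vs \<and> S \<subseteq> set vs \<and> rainbow c (cycle_edges vs))" by blast
  have "{0,1} \<subseteq> {..<2*m}" "card {0::nat,1} = 2" using m by auto
  then obtain vs where vs: "is_cycle (CPE m) vs" "{0,1} \<subseteq> set vs" "rainbow c (cycle_edges vs)" using P by blast
  have "length vs \<noteq> 3"
  proof
    assume "length vs = 3"
    then have "{0,1} \<in> CPE m" using tri_pairs[OF vs(1)] vs(2) by simp
    then show False using CP_mem by fastforce
  qed
  then have "4 \<le> length vs" using vs(1) unfolding is_cycle_def by simp
  moreover have "card (cycle_edges vs) \<le> k" using rainbow_card_le[OF vs(3) c] vs(1) unfolding is_cycle_def by simp
  ultimately show "4 \<le> k" using card_cycle_edges[OF vs(1)] by simp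
qed

definition pcol :: "nat set \<Rightarrow> nat" where
  "pcol e = (Min e + Max e) mod 2"

lemma rx_CP:
  assumes m: "2 \<le> m"
  shows "rx 2 {..<2*m} (CPE m) = 2"
proof -
  have "rx 2 {..<2*m} (CPE m) = (LEAST k. \<exists>c. colouring (CPE m) k c \<and>
      (\<forall>S. S \<subseteq> {..<2*m} \<and> card S = 2 \<longrightarrow>
         (\<exists>TV TE. is_tree_in {..<2*m} (CPE m) TV TE \<and> S \<subseteq> TV \<and> rainbow c TE)))" unfolding rx_def by simp
  also have "\<dots> = 2"
  proof (rule Least_equality)
    have col: "colouring (CPE m) 2 pcol" unfolding colouring_def pcol_def by (simp add: image_subset_iff)
    have P: "\<exists>TV TE. is_tree_in {..<2*m} (CPE m) TV TE \<and> S \<subseteq> TV \<and> rainbow pcol TE"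
      if S: "S \<subseteq> {..<2*m}" "card S = 2" for S
    proof -
      obtain u w where uw: "S = {u, w}" "u \<noteq> w" using S(2) by (auto simp: card_2_iff)
      have un: "u < 2*m" "w < 2*m" using S uw by auto
      show ?thesis
      proof (cases "u div 2 = w div 2")
        case False
        have e: "{u,w} \<in> CPE m" using un False by (rule CP_edge)
        have "is_tree_in {..<2*m} (CPE m) {u,w} {{u,w}}"
        proof (rule tree_intro)
          show "{u,w} \<subseteq> {..<2*m}" using un by auto
          show "{{u,w}} \<subseteq> CPE m" using e by simp
          show "\<forall>e\<in>{{u,w}}. e \<subseteq> {u,w}" by simp
          show "graph_connected {u,w} {{u,w}}"
          proof (rule conn_root[of u])
            fix v assume "v \<in> {u,w}"
            then have "v = u \<or> v = w" by simp
            then show "(\<lambda>x y. {x,y} \<in> {{u,w}})\<^sup>*\<^sup>* v u"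
            proof
              assume "v = u" then show ?thesis by simp
            next
              assume "v = w" then show ?thesis by (intro r_into_rtranclp) (simp add: insert_commute)
            qed
          qed simp
          show "finite {{u,w}}" by simp
          show "card {{u,w}} < card {u,w}" using uw(2) by simp
        qed
        moreover have "rainbow pcol {{u,w}}" unfolding rainbow_def by simp
        ultimately show ?thesis using uw(1) by blast
      next
        case True
        define i where "i = u div 2"
        define j where "j = (if i = 0 then 1 else (0::nat))"
        have ij: "i < m" "j < m" "i \<noteq> j" unfolding i_def j_def using un m by auto
        have "u \<in> {2*i, 2*i+1}" "w \<in> {2*i, 2*i+1}" unfolding i_def using True by auto
        then have Ssub: "S \<subseteq> {2*i, 2*i+1, 2*j}" using uw by auto
        have e1: "{2*i, 2*j} \<in> CPE m" "{2*j, 2*i+1} \<in> CPE m" using ij by (intro CP_edge; simp)+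
        have neq: "{2*i, 2*j} \<noteq> {2*j, 2*i+1}" using ij by (auto simp: doubleton_eq_iff)
        have tree: "is_tree_in {..<2*m} (CPE m) {2*i, 2*i+1, 2*j} {{2*i, 2*j}, {2*j, 2*i+1}}"
        proof (rule tree_intro)
          show "{2*i, 2*i+1, 2*j} \<subseteq> {..<2*m}" using ij by auto
          show "{{2*i, 2*j}, {2*j, 2*i+1}} \<subseteq> CPE m" using e1 by simp
          show "\<forall>e\<in>{{2*i, 2*j}, {2*j, 2*i+1}}. e \<subseteq> {2*i, 2*i+1, 2*j}" by auto
          show "graph_connected {2*i, 2*i+1, 2*j} {{2*i, 2*j}, {2*j, 2*i+1}}"
          proof (rule conn_root[of "2*j"])
            fix v assume "v \<in> {2*i, 2*i+1, 2*j}"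
            then have "v = 2*j \<or> v = 2*i \<or> v = 2*i+1" by auto
            then show "(\<lambda>x y. {x,y} \<in> {{2*i, 2*j}, {2*j, 2*i+1}})\<^sup>*\<^sup>* v (2*j)"
            proof (elim disjE)
              assume "v = 2*j" then show ?thesis by simp
            next
              assume "v = 2*i" then show ?thesis by (intro r_into_rtranclp) simp
            next
              assume "v = 2*i+1" then show ?thesis by (intro r_into_rtranclp) (simp add: insert_commute)
            qed
          qed simp
          show "finite {{2*i, 2*j}, {2*j, 2*i+1}}" by simp
          have "card {2*i, 2*i+1, 2*j} = 3" using ij by auto
          then show "card {{2*i, 2*j}, {2*j, 2*i+1}} < card {2*i, 2*i+1, 2*j}" using neq by simp
        qed
        have "pcol {2*i, 2*j} = 0" "pcol {2*j, 2*i+1} = 1" unfolding pcol_def by (simp_all add: min_def max_def)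
        then have "rainbow pcol {{2*i, 2*j}, {2*j, 2*i+1}}" unfolding rainbow_def inj_on_def by auto
        then show ?thesis using tree Ssub by blast
      qed
    qed
    show "\<exists>c. colouring (CPE m) 2 c \<and> (\<forall>S. S \<subseteq> {..<2*m} \<and> card S = 2 \<longrightarrow>
         (\<exists>TV TE. is_tree_in {..<2*m} (CPE m) TV TE \<and> S \<subseteq> TV \<and> rainbow c TE))"
      using col P by blast
  next
    fix k assume "\<exists>c. colouring (CPE m) k c \<and> (\<forall>S. S \<subseteq> {..<2*m} \<and> card S = 2 \<longrightarrow>
         (\<exists>TV TE. is_tree_in {..<2*m} (CPE m) TV TE \<and> S \<subseteq> TV \<and> rainbow c TE))"
    then obtain c where c: "colouring (CPE m) k c" and P: "\<forall>S. S \<subseteq> {..<2*m} \<and> card S = 2 \<longrightarrow>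
         (\<exists>TV TE. is_tree_in {..<2*m} (CPE m) TV TE \<and> S \<subseteq> TV \<and> rainbow c TE)" by blast
    have "{0,1} \<subseteq> {..<2*m}" "card {0::nat,1} = 2" using m by auto
    then obtain TV TE where T: "is_tree_in {..<2*m} (CPE m) TV TE" "{0,1} \<subseteq> TV" "rainbow c TE" using P by blast
    have TE: "TE \<subseteq> CPE m" "\<forall>e\<in>TE. e \<subseteq> TV" "graph_connected TV TE" "TV \<subseteq> {..<2*m}"
      using T(1) unfolding is_tree_in_def by auto
    have conn: "\<forall>u\<in>TV. \<forall>v\<in>TV. (\<lambda>x y. {x,y} \<in> TE)\<^sup>*\<^sup>* u v"
      using TE(3) unfolding graph_connected_def by (rule conjunct2)
    have z: "0 \<in> TV" "1 \<in> TV" using T(2) by auto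
    have "(\<lambda>x y. {x,y} \<in> TE)\<^sup>*\<^sup>* 0 1" using conn[rule_format, OF z(1) z(2)] .
    then have "\<exists>x. {0, x} \<in> TE"
    proof (rule converse_rtranclpE)
      assume "(0::nat) = 1" then show ?thesis by simp
    next
      fix y assume "(\<lambda>x y. {x,y} \<in> TE) 0 y"
      then have "{0, y} \<in> TE" by simp
      then show ?thesis by (rule exI)
    qed
    then obtain x where x: "{0, x} \<in> TE" by (elim exE)
    have "x div 2 \<noteq> 0" using CP_mem[of 0 x m] x TE(1) by auto
    then have x01: "x \<noteq> 0" "x \<noteq> 1" by auto
    have "x \<in> TV" using TE(2) x by auto
    then have "{0,1,x} \<subseteq> TV" using T(2) by auto
    moreover have "finite TV" using TE(4) finite_subset by blast
    ultimately have "card {0,1,x} \<le> card TV" by (rule card_mono[rotated])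
    moreover have "card {0::nat,1,x} = 3" using x01 by simp
    moreover have "finite TE" using TE(1) simple_graph_finite_E[OF CP_simple] finite_subset by blast
    then have "card TV \<le> card TE + 1" using conn_card TE(3) by blast
    moreover have "card TE \<le> k" using rainbow_card_le[OF T(3) c TE(1)] .
    ultimately show "2 \<le> k" by simp
  qed
  finally show ?thesis .
qed



definition SGE :: "nat \<Rightarrow> nat \<Rightarrow> nat set set" where
  "SGE h n = {{x, y} | x y. x < n \<and> y < n \<and> x \<noteq> y \<and> (x < h \<or> y < h)}"

lemma SG_mem: assumes "{x,y} \<in> SGE h n" shows "x < n \<and> y < n \<and> x \<noteq> y \<and> (x < h \<or> y < h)"
proof -
  obtain a b where ab: "{x,y} = {a,b}" "a < n" "b < n" "a \<noteq> b" "a < h \<or> b < h"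
    using assms unfolding SGE_def by blast
  then have "(x = a \<and> y = b) \<or> (x = b \<and> y = a)" by (auto simp: doubleton_eq_iff)
  then show ?thesis using ab by auto
qed

lemma SG_edge: "x < n \<Longrightarrow> y < n \<Longrightarrow> x \<noteq> y \<Longrightarrow> x < h \<or> y < h \<Longrightarrow> {x,y} \<in> SGE h n"
  unfolding SGE_def by blast

lemma SG_simple: "simple_graph {..<n} (SGE h n)"
  unfolding simple_graph_def
proof (intro conjI ballI)
  fix e assume "e \<in> SGE h n"
  then obtain x y where "e = {x,y}" "x < n" "y < n" "x \<noteq> y" unfolding SGE_def by blast
  then show "\<exists>u v. u \<in> {..<n} \<and> v \<in> {..<n} \<and> u \<noteq> v \<and> e = {u, v}" by auto
qed simp

lemma SG_finite: "finite (SGE h n)"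
  using simple_graph_finite_E[OF SG_simple] .

lemma SG_conn: assumes "0 < h" "0 < n" shows "graph_connected {..<n} (SGE h n)"
proof (rule conn_root[of 0])
  show "0 \<in> {..<n}" using assms by simp
  fix u assume u: "u \<in> {..<n}"
  show "(\<lambda>x y. {x,y} \<in> SGE h n)\<^sup>*\<^sup>* u 0"
  proof (cases "u = 0")
    case True then show ?thesis by simp
  next
    case False
    then have "{u, 0} \<in> SGE h n" using u assms by (intro SG_edge) auto
    then show ?thesis by (intro r_into_rtranclp) simp
  qed
qed

lemma SG_edge_hub: assumes "{x,y} \<in> SGE h n" "h \<le> x" shows "y < h"
  using SG_mem[OF assms(1)] assms(2) by auto


definition bcol :: "nat set \<Rightarrow> nat" where
  "bcol e = (if e = {0,1} then 0 else if 0 \<in> e then 1 else 2)"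

lemma SG1_P:
  assumes n: "3 \<le> n"
  shows "\<exists>c. colouring (SGE 2 n) 3 c \<and> (\<forall>S. S \<subseteq> {..<n} \<and> card S = 1 \<longrightarrow>
         (\<exists>vs. is_cycle (SGE 2 n) vs \<and> S \<subseteq> set vs \<and> rainbow c (cycle_edges vs)))"
proof -
  have col: "colouring (SGE 2 n) 3 bcol" unfolding colouring_def bcol_def by (simp add: image_subset_iff)
  have P: "\<exists>vs. is_cycle (SGE 2 n) vs \<and> S \<subseteq> set vs \<and> rainbow bcol (cycle_edges vs)"
    if S: "S \<subseteq> {..<n}" "card S = 1" for S
  proof -
    obtain v where v: "S = {v}" using S(2) card_1_singletonE by blast
    have vn: "v < n" using S v by auto
    define w where "w = (if 2 \<le> v then v else 2)"
    have w: "2 \<le> w" "w < n" unfolding w_def using vn n by auto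
    have Ssub: "S \<subseteq> set [0,1,w]" using v unfolding w_def by auto
    have E: "{0,1} \<in> SGE 2 n" "{1,w} \<in> SGE 2 n" "{w,0} \<in> SGE 2 n" using w n by (intro SG_edge; simp)+
    have cyc: "is_cycle (SGE 2 n) [0,1,w]" unfolding is_cycle_def cycle_edges3 using E w by auto
    have ne1: "{1,w} \<noteq> {0::nat,1}" "{w,0} \<noteq> {0::nat,1}" using w by (auto simp: doubleton_eq_iff)
    have "bcol {0,1} = 0" "bcol {1,w} = 2" "bcol {w,0} = 1" unfolding bcol_def using ne1 w by auto
    then have "rainbow bcol (cycle_edges [0,1,w])" unfolding rainbow_def cycle_edges3 inj_on_def by auto
    then show ?thesis using cyc Ssub by blast
  qed
  show "\<exists>c. colouring (SGE 2 n) 3 c \<and> (\<forall>S. S \<subseteq> {..<n} \<and> card S = 1 \<longrightarrow>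
         (\<exists>vs. is_cycle (SGE 2 n) vs \<and> S \<subseteq> set vs \<and> rainbow c (cycle_edges vs)))"
    using col P by blast
qed

lemma crx_SG1:
  assumes n: "3 \<le> n"
  shows "crx 1 {..<n} (SGE 2 n) = 3"
  unfolding crx_def
proof (rule Least_equality)
  show "\<exists>c. colouring (SGE 2 n) 3 c \<and> (\<forall>S. S \<subseteq> {..<n} \<and> card S = 1 \<longrightarrow>
         (\<exists>vs. is_cycle (SGE 2 n) vs \<and> S \<subseteq> set vs \<and> rainbow c (cycle_edges vs)))"
    using SG1_P[OF n] .
next
  fix m assume "\<exists>c. colouring (SGE 2 n) m c \<and> (\<forall>S. S \<subseteq> {..<n} \<and> card S = 1 \<longrightarrow>
         (\<exists>vs. is_cycle (SGE 2 n) vs \<and> S \<subseteq> set vs \<and> rainbow c (cycle_edges vs)))"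
  then obtain c where c: "colouring (SGE 2 n) m c" and P: "\<forall>S. S \<subseteq> {..<n} \<and> card S = 1 \<longrightarrow>
         (\<exists>vs. is_cycle (SGE 2 n) vs \<and> S \<subseteq> set vs \<and> rainbow c (cycle_edges vs))" by blast
  have "{0} \<subseteq> {..<n}" "card {0::nat} = 1" using n by auto
  then obtain vs where vs: "is_cycle (SGE 2 n) vs" "rainbow c (cycle_edges vs)" using P by blast
  have "card (cycle_edges vs) \<le> m" using rainbow_card_le[OF vs(2) c] vs(1) unfolding is_cycle_def by simp
  moreover have "3 \<le> length vs" using vs(1) unfolding is_cycle_def by simp
  ultimately show "3 \<le> m" using card_cycle_edges[OF vs(1)] by simp
qed

lemma kcyc_from_crx:
  assumes "\<exists>c. colouring E m c \<and> (\<forall>S. S \<subseteq> V \<and> card S = k \<longrightarrow>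
         (\<exists>vs. is_cycle E vs \<and> S \<subseteq> set vs \<and> rainbow c (cycle_edges vs)))"
  shows "k_cyclic k V E"
  using assms unfolding k_cyclic_def by blast



lemma pigeon_fiber:
  assumes A: "finite A" and fB: "f ` A \<subseteq> B" and B: "finite B" and c: "r * card B < card A"
  shows "\<exists>b\<in>B. r < card {a\<in>A. f a = b}"
proof (rule ccontr)
  assume "\<not> (\<exists>b\<in>B. r < card {a\<in>A. f a = b})"
  then have le: "\<And>b. b \<in> B \<Longrightarrow> card {a\<in>A. f a = b} \<le> r" by (simp add: not_less)
  have "A = (\<Union>b\<in>B. {a\<in>A. f a = b})" using fB by auto
  then have "card A \<le> (\<Sum>b\<in>B. card {a\<in>A. f a = b})" using card_UN_le[OF B, of "\<lambda>b. {a\<in>A. f a = b}"] by simp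
  also have "\<dots> \<le> of_nat (card B) * r" by (rule sum_bounded_above) (rule le)
  finally have "card A \<le> card B * r" by simp
  then show False using c by (simp add: mult.commute)
qed

lemma pred_idx: fixes j L :: nat assumes "j < L" shows "\<exists>i<L. (i + 1) mod L = j"
proof (cases "j = 0")
  case True
  then have "(L - 1 + 1) mod L = j" using assms by simp
  moreover have "L - 1 < L" using assms by simp
  ultimately show ?thesis by blast
next
  case False
  then have "(j - 1 + 1) mod L = j" using assms by simp
  moreover have "j - 1 < L" using assms by simp
  ultimately show ?thesis by blast
qed

lemma twin_count:
  assumes cyc: "is_cycle (SGE k n) vs" and T: "T \<subseteq> set vs" "T \<subseteq> {k..<n}" "card T = k" "1 \<le> k"
    and col: "\<And>x h. x \<in> T \<Longrightarrow> h < k \<Longrightarrow> c {x,h} = vec ! h"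
    and rb: "rainbow c (cycle_edges vs)"
  shows False
proof -
  let ?L = "length vs"
  have L: "3 \<le> ?L" "distinct vs" "cycle_edges vs \<subseteq> SGE k n" using cyc unfolding is_cycle_def by auto
  have L0: "0 < ?L" using L(1) by linarith
  define P1 where "P1 = {i \<in> {..<?L}. vs!i \<in> T}"
  define P2 where "P2 = {i \<in> {..<?L}. vs!((i+1) mod ?L) \<in> T}"
  have fin: "finite P1" "finite P2" unfolding P1_def P2_def by simp_all
  have "T \<subseteq> (\<lambda>i. vs!i) ` P1"
  proof
    fix t assume t: "t \<in> T"
    then have "t \<in> set vs" using T(1) by blast
    then obtain i where "i < ?L" "vs!i = t" by (metis in_set_conv_nth)
    then show "t \<in> (\<lambda>i. vs!i) ` P1" unfolding P1_def using t by auto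
  qed
  then have c1: "k \<le> card P1" using T(3) card_mono[OF finite_imageI[OF fin(1)]] card_image_le[OF fin(1)]
    by (metis le_trans)
  have "T \<subseteq> (\<lambda>i. vs!((i+1) mod ?L)) ` P2"
  proof
    fix t assume t: "t \<in> T"
    then have "t \<in> set vs" using T(1) by blast
    then obtain j where j: "j < ?L" "vs!j = t" by (metis in_set_conv_nth)
    then obtain i where i: "i < ?L" "(i + 1) mod ?L = j" using pred_idx by blast
    then show "t \<in> (\<lambda>i. vs!((i+1) mod ?L)) ` P2" unfolding P2_def using t j by auto
  qed
  then have c2: "k \<le> card P2" using T(3) card_mono[OF finite_imageI[OF fin(2)]] card_image_le[OF fin(2)]
    by (metis le_trans)
  have edge: "{vs!i, vs!((i+1) mod ?L)} \<in> SGE k n" if "i < ?L" for i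
  proof -
    have "cyc_edge vs i \<in> cycle_edges vs" unfolding cycle_edges_eq using that by simp
    then show ?thesis using L(3) unfolding cyc_edge_def by blast
  qed
  have disj: "P1 \<inter> P2 = {}"
  proof (rule ccontr)
    assume "P1 \<inter> P2 \<noteq> {}"
    then obtain i where i: "i < ?L" "vs!i \<in> T" "vs!((i+1) mod ?L) \<in> T" unfolding P1_def P2_def by auto
    have "vs!((i+1) mod ?L) < k" using SG_edge_hub[OF edge[OF i(1)]] i(2) T(2) by auto
    then show False using i(3) T(2) by auto
  qed
  have cU: "2 * k \<le> card (P1 \<union> P2)" using card_Un_disjoint[OF fin disj] c1 c2 by simp
  define F where "F = cyc_edge vs ` (P1 \<union> P2)"
  have sub: "P1 \<union> P2 \<subseteq> {..<?L}" unfolding P1_def P2_def by auto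
  have cF: "card F = card (P1 \<union> P2)" unfolding F_def
    using card_image[OF inj_on_subset[OF cyc_edge_inj[OF L(2,1)] sub]] .
  have Fsub: "F \<subseteq> cycle_edges vs" unfolding F_def cycle_edges_eq using sub by auto
  have cimg: "c ` F \<subseteq> (\<lambda>h. vec ! h) ` {..<k}"
  proof
    fix z assume "z \<in> c ` F"
    then obtain i where i: "i \<in> P1 \<union> P2" "z = c (cyc_edge vs i)" unfolding F_def by auto
    have iL: "i < ?L" using i(1) sub by auto
    let ?x = "vs!i" and ?y = "vs!((i+1) mod ?L)"
    have e: "{?x, ?y} \<in> SGE k n" using edge[OF iL] .
    show "z \<in> (\<lambda>h. vec ! h) ` {..<k}"
    proof (cases "i \<in> P1")
      case True
      then have xT: "?x \<in> T" unfolding P1_def by simp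
      then have "?y < k" using SG_edge_hub[OF e] T(2) by auto
      moreover have "z = vec ! ?y" using i(2) col[OF xT] \<open>?y < k\<close> unfolding cyc_edge_def by simp
      ultimately show ?thesis by blast
    next
      case False
      then have "i \<in> P2" using i(1) by simp
      then have yT: "?y \<in> T" unfolding P2_def by simp
      have e': "{?y, ?x} \<in> SGE k n" using e by (simp add: insert_commute)
      then have "?x < k" using SG_edge_hub[OF e'] yT T(2) by auto
      moreover have "z = vec ! ?x" using i(2) col[OF yT] \<open>?x < k\<close> unfolding cyc_edge_def
        by (simp add: insert_commute)
      ultimately show ?thesis by blast
    qed
  qed
  have "card (c ` F) \<le> k"
    using card_mono[OF finite_imageI[OF finite_lessThan] cimg] card_image_le[of "{..<k}" "\<lambda>h. vec ! h"]
    by simp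
  moreover have "card (c ` F) = card F" using inj_on_subset[OF rb[unfolded rainbow_def] Fsub] by (rule card_image)
  ultimately show False using cF cU T(4) by simp
qed

definition icol :: "nat \<Rightarrow> nat set \<Rightarrow> nat" where
  "icol n e = Min e * n + Max e"

lemma icol_SG:
  assumes "0 < n"
  shows "colouring (SGE h n) (n * n) (icol n) \<and> inj_on (icol n) (SGE h n)"
proof
  have val: "icol n {x,y} = min x y * n + max x y" for x y unfolding icol_def by simp
  show "colouring (SGE h n) (n * n) (icol n)" unfolding colouring_def
  proof (rule image_subsetI)
    fix e assume "e \<in> SGE h n"
    then obtain x y where e: "e = {x,y}" "x < n" "y < n" unfolding SGE_def by blast
    have "min x y * n + max x y < n * n"
    proof -
      have "min x y + 1 \<le> n" "max x y < n" using e by auto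
      then have "min x y * n + max x y < (min x y + 1) * n" by simp
      also have "\<dots> \<le> n * n" using \<open>min x y + 1 \<le> n\<close> by (rule mult_le_mono1)
      finally show ?thesis .
    qed
    then show "icol n e \<in> {..<n * n}" using val e(1) by simp
  qed
  show "inj_on (icol n) (SGE h n)"
  proof (rule inj_onI)
    fix e1 e2 assume e1: "e1 \<in> SGE h n" and e2: "e2 \<in> SGE h n" and eq: "icol n e1 = icol n e2"
    obtain x1 y1 where 1: "e1 = {x1,y1}" "x1 < n" "y1 < n" using e1 unfolding SGE_def by blast
    obtain x2 y2 where 2: "e2 = {x2,y2}" "x2 < n" "y2 < n" using e2 unfolding SGE_def by blast
    have eq': "min x1 y1 * n + max x1 y1 = min x2 y2 * n + max x2 y2" using eq 1 2 val by simp
    have m1: "max x1 y1 < n" "max x2 y2 < n" using 1 2 by auto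
    have "(min x1 y1 * n + max x1 y1) mod n = max x1 y1" using m1 by simp
    moreover have "(min x2 y2 * n + max x2 y2) mod n = max x2 y2" using m1 by simp
    ultimately have mx: "max x1 y1 = max x2 y2" using eq' by simp
    then have mn: "min x1 y1 = min x2 y2" using eq' assms by simp
    have "{x1,y1} = {min x1 y1, max x1 y1}" "{x2,y2} = {min x2 y2, max x2 y2}" by (auto simp: min_def max_def)
    then show "e1 = e2" using 1 2 mx mn by simp
  qed
qed



lemma SG_kcyc:
  assumes k: "2 \<le> k" and n: "2 * k \<le> n"
  shows "k_cyclic k {..<n} (SGE k n)"
  unfolding k_cyclic_def
proof (intro allI impI)
  fix S assume S: "S \<subseteq> {..<n} \<and> card S = k"
  define SL where "SL = S - {..<k}"
  have finS: "finite S" using S finite_subset by blast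
  have SLsub: "SL \<subseteq> {k..<n}" using S unfolding SL_def by auto
  have cSL: "card SL \<le> k" using card_mono[OF finS, of SL] S unfolding SL_def by auto
  have "k \<le> card {k..<n}" using n by simp
  then obtain LL where LL: "SL \<subseteq> LL" "LL \<subseteq> {k..<n}" "card LL = k"
    using ext_set[of "{k..<n}" SL k] SLsub cSL by auto
  have finLL: "finite LL" using LL(2) finite_subset by blast
  obtain ls where ls: "set ls = LL" "distinct ls" using finite_distinct_list[OF finLL] by blast
  have lls: "length ls = k" using distinct_card[OF ls(2)] ls(1) LL(3) by simp
  have lsk: "ls ! t \<in> LL" if "t < k" for t using ls(1) lls that nth_mem by metis
  define f where "f = (\<lambda>j. if even j then j div 2 else ls ! (j div 2))"
  define vs where "vs = map f [0..<2*k]"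
  have lvs: "length vs = 2 * k" unfolding vs_def by simp
  have vsn: "vs ! j = f j" if "j < 2 * k" for j unfolding vs_def using that by simp
  have fhub: "f j < k" if "even j" "j < 2 * k" for j unfolding f_def using that by auto
  have fleaf: "k \<le> f j \<and> f j < n" if "odd j" "j < 2 * k" for j
  proof -
    have "j div 2 < k" using that by auto
    then have "ls ! (j div 2) \<in> LL" by (rule lsk)
    then have "ls ! (j div 2) \<in> {k..<n}" using LL(2) by blast
    then show ?thesis unfolding f_def using that by simp
  qed
  have fn: "f j < n" if "j < 2 * k" for j
    using fhub[of j] fleaf[of j] that n by (cases "even j") auto
  have finj: "f i = f j \<Longrightarrow> i < 2 * k \<Longrightarrow> j < 2 * k \<Longrightarrow> i = j" for i j
  proof -
    assume eq: "f i = f j" and i: "i < 2 * k" and j: "j < 2 * k"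
    show "i = j"
    proof (cases "even i")
      case True
      show ?thesis
      proof (cases "even j")
        case True
        then have "i div 2 = j div 2" using eq \<open>even i\<close> unfolding f_def by simp
        then show ?thesis using True \<open>even i\<close> by (metis dvd_mult_div_cancel)
      next
        case False
        then show ?thesis using fhub[OF \<open>even i\<close> i] fleaf[OF False j] eq by simp
      qed
    next
      case False
      show ?thesis
      proof (cases "even j")
        case True
        then show ?thesis using fhub[OF True j] fleaf[OF False i] eq by simp
      next
        case F2: False
        have "ls ! (i div 2) = ls ! (j div 2)" using eq False F2 unfolding f_def by simp
        moreover have "i div 2 < length ls" "j div 2 < length ls" using i j lls by auto
        ultimately have "i div 2 = j div 2" using nth_eq_iff_index_eq[OF ls(2)] by blast
        then show ?thesis using False F2 by (metis odd_two_times_div_two_succ)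
      qed
    qed
  qed
  have dvs: "distinct vs"
    unfolding distinct_conv_nth lvs using finj vsn by auto
  have edges: "cycle_edges vs \<subseteq> SGE k n"
  proof
    fix e assume "e \<in> cycle_edges vs"
    then obtain i where i: "i < 2 * k" "e = cyc_edge vs i" unfolding cycle_edges_eq lvs by auto
    define i' where "i' = (i + 1) mod (2 * k)"
    have i'l: "i' < 2 * k" unfolding i'_def using k by simp
    have par: "even i \<or> even i'"
    proof (cases "i + 1 < 2 * k")
      case True then have "i' = i + 1" unfolding i'_def by simp
      then show ?thesis by auto
    next
      case False then have "i + 1 = 2 * k" using i by simp
      then have "i' = 0" unfolding i'_def by simp
      then show ?thesis by simp
    qed
    have neq: "i \<noteq> i'"
    proof (cases "i + 1 < 2 * k")
      case True then show ?thesis unfolding i'_def by simp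
    next
      case False then have "i + 1 = 2 * k" using i by simp
      then show ?thesis unfolding i'_def using k by simp
    qed
    have e': "e = {f i, f i'}" using i vsn i'l unfolding cyc_edge_def lvs i'_def by simp
    have "f i \<noteq> f i'" using finj[OF _ i(1) i'l] neq by blast
    moreover have "f i < k \<or> f i' < k" using par fhub i(1) i'l by blast
    ultimately have "{f i, f i'} \<in> SGE k n" using fn[OF i(1)] fn[OF i'l] by (intro SG_edge) simp_all
    then show "e \<in> SGE k n" using e' by simp
  qed
  have cyc: "is_cycle (SGE k n) vs" unfolding is_cycle_def using lvs k dvs edges by simp
  have "S \<subseteq> set vs"
  proof
    fix s assume s: "s \<in> S"
    show "s \<in> set vs"
    proof (cases "s < k")
      case True
      then have "f (2 * s) = s" unfolding f_def by simp
      moreover have "2 * s < 2 * k" using True by simp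
      ultimately show ?thesis using vsn lvs by (metis nth_mem)
    next
      case False
      then have "s \<in> LL" using s LL(1) unfolding SL_def by auto
      then obtain t where t: "t < k" "ls ! t = s" using ls(1) lls by (metis in_set_conv_nth)
      have "f (2 * t + 1) = s" unfolding f_def using t by simp
      moreover have "2 * t + 1 < 2 * k" using t by simp
      ultimately show ?thesis using vsn lvs by (metis nth_mem)
    qed
  qed
  then show "\<exists>vs. is_cycle (SGE k n) vs \<and> S \<subseteq> set vs" using cyc by blast
qed



definition scol :: "nat \<Rightarrow> nat set \<Rightarrow> nat" where
  "scol k e = (if Max e < k then (if Min e = 0 then k + Max e - 1 else 0) else Min e)"

lemma scol2: "scol k {x,y} = (if max x y < k then (if min x y = 0 then k + max x y - 1 else 0) else min x y)"
proof -
  have "Max {x,y} = max x y" "Min {x,y} = min x y" by simp_all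
  then show ?thesis unfolding scol_def by (simp only:)
qed

lemma SG_rx_le:
  assumes k: "2 \<le> k" and n: "k \<le> n"
  shows "rx k {..<n} (SGE k n) \<le> 2 * k - 1"
proof -
  have "k \<noteq> 1" using k by simp
  then have eq: "rx k {..<n} (SGE k n) = (LEAST m. \<exists>c. colouring (SGE k n) m c \<and>
      (\<forall>S. S \<subseteq> {..<n} \<and> card S = k \<longrightarrow>
         (\<exists>TV TE. is_tree_in {..<n} (SGE k n) TV TE \<and> S \<subseteq> TV \<and> rainbow c TE)))" unfolding rx_def by simp
  have col: "colouring (SGE k n) (2 * k - 1) (scol k)" unfolding colouring_def
  proof (rule image_subsetI)
    fix e assume "e \<in> SGE k n"
    then obtain x y where e: "e = {x,y}" "x < n" "y < n" "x \<noteq> y" "x < k \<or> y < k" unfolding SGE_def by blast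
    have "scol k {x,y} < 2 * k - 1"
    proof (cases "max x y < k")
      case True then show ?thesis unfolding scol2 using k by auto
    next
      case False
      then have "min x y < k" using e(5) by auto
      then show ?thesis unfolding scol2 using False k by auto
    qed
    then show "scol k e \<in> {..<2 * k - 1}" using e(1) by simp
  qed
  have P: "\<exists>TV TE. is_tree_in {..<n} (SGE k n) TV TE \<and> S \<subseteq> TV \<and> rainbow (scol k) TE"
    if S: "S \<subseteq> {..<n}" "card S = k" for S
  proof -
    define SL where "SL = S - {..<k}"
    have finS: "finite S" using S finite_subset by blast
    have finSL: "finite SL" unfolding SL_def using finS by simp
    have SLsub: "SL \<subseteq> {k..<n}" using S unfolding SL_def by auto
    have cSL: "card SL \<le> card {..<k}" using card_mono[OF finS, of SL] S unfolding SL_def by auto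
    obtain \<sigma> where \<sigma>: "\<sigma> ` SL \<subseteq> {..<k}" "inj_on \<sigma> SL" using card_le_inj[OF finSL finite_lessThan cSL] by blast
    have \<sigma>k: "\<sigma> x < k" if "x \<in> SL" for x using \<sigma>(1) that by auto
    have SLk: "k \<le> x \<and> x < n" if "x \<in> SL" for x using SLsub that by auto
    define TV where "TV = {..<k} \<union> SL"
    define H where "H = (\<lambda>j. {0,j}) ` {1..<k}"
    define Lf where "Lf = (\<lambda>x. {x, \<sigma> x}) ` SL"
    define TE where "TE = H \<union> Lf"
    have tree: "is_tree_in {..<n} (SGE k n) TV TE"
    proof (rule tree_intro)
      show "TV \<subseteq> {..<n}" unfolding TV_def using n SLsub by auto
      show "TE \<subseteq> SGE k n"
      proof
        fix e assume "e \<in> TE"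
        then have "e \<in> H \<or> e \<in> Lf" unfolding TE_def by simp
        then show "e \<in> SGE k n"
        proof
          assume "e \<in> H"
          then obtain j where j: "1 \<le> j" "j < k" "e = {0,j}" unfolding H_def by auto
          then show ?thesis using n k by (auto intro!: SG_edge)
        next
          assume "e \<in> Lf"
          then obtain x where x: "x \<in> SL" "e = {x, \<sigma> x}" unfolding Lf_def by auto
          have "\<sigma> x < k" "k \<le> x" "x < n" using \<sigma>k[OF x(1)] SLk[OF x(1)] by auto
          then show ?thesis using x(2) n by (auto intro!: SG_edge)
        qed
      qed
      show "\<forall>e\<in>TE. e \<subseteq> TV"
      proof
        fix e assume "e \<in> TE"
        then have "e \<in> H \<or> e \<in> Lf" unfolding TE_def by simp
        then show "e \<subseteq> TV"
        proof
          assume "e \<in> H"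
          then obtain j where j: "1 \<le> j" "j < k" "e = {0,j}" unfolding H_def by auto
          then show ?thesis unfolding TV_def using k by auto
        next
          assume "e \<in> Lf"
          then obtain x where x: "x \<in> SL" "e = {x, \<sigma> x}" unfolding Lf_def by auto
          then show ?thesis unfolding TV_def using \<sigma>k[OF x(1)] by auto
        qed
      qed
      show "graph_connected TV TE"
      proof (rule conn_root[of 0])
        show "0 \<in> TV" unfolding TV_def using k by simp
        have hub: "(\<lambda>x y. {x,y} \<in> TE)\<^sup>*\<^sup>* j 0" if "j < k" for j
        proof (cases "j = 0")
          case True then show ?thesis by simp
        next
          case False
          then have "{0,j} \<in> H" unfolding H_def using that by auto
          then have "{j,0} \<in> TE" unfolding TE_def by (simp add: insert_commute)
          then show ?thesis by (intro r_into_rtranclp) simp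
        qed
        fix v assume v: "v \<in> TV"
        show "(\<lambda>x y. {x,y} \<in> TE)\<^sup>*\<^sup>* v 0"
        proof (cases "v < k")
          case True then show ?thesis by (rule hub)
        next
          case False
          then have vSL: "v \<in> SL" using v unfolding TV_def by auto
          then have "{v, \<sigma> v} \<in> TE" unfolding TE_def Lf_def by auto
          then have "(\<lambda>x y. {x,y} \<in> TE) v (\<sigma> v)" by simp
          moreover have "(\<lambda>x y. {x,y} \<in> TE)\<^sup>*\<^sup>* (\<sigma> v) 0" using hub[OF \<sigma>k[OF vSL]] .
          ultimately show ?thesis by (rule converse_rtranclp_into_rtranclp)
        qed
      qed
      show "finite TE" unfolding TE_def H_def Lf_def using finSL by simp
      have "card TE \<le> card H + card Lf" unfolding TE_def by (rule card_Un_le)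
      also have "card H \<le> k - 1" unfolding H_def using card_image_le[of "{1..<k}" "\<lambda>j. {0,j}"] by simp
      also have "card Lf \<le> card SL" unfolding Lf_def using card_image_le[OF finSL] by simp
      finally have cTE: "card TE \<le> k - 1 + card SL" by simp
      have "card TV = k + card SL" unfolding TV_def using finSL SLsub
        by (subst card_Un_disjoint) auto
      then show "card TE < card TV" using cTE k by simp
    qed
    have rb: "rainbow (scol k) TE" unfolding rainbow_def
    proof (rule inj_onI)
      have vH: "scol k {0,j} = k + j - 1" if "1 \<le> j" "j < k" for j unfolding scol2 using that by simp
      have vL: "scol k {x, \<sigma> x} = \<sigma> x" if "x \<in> SL" for x
        unfolding scol2 using \<sigma>k[OF that] SLk[OF that] by simp
      fix e1 e2 assume e1: "e1 \<in> TE" and e2: "e2 \<in> TE" and eq: "scol k e1 = scol k e2"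
      have c1: "e1 \<in> H \<or> e1 \<in> Lf" "e2 \<in> H \<or> e2 \<in> Lf" using e1 e2 unfolding TE_def by simp_all
      show "e1 = e2"
      proof (cases "e1 \<in> H")
        case True
        then obtain j where j: "1 \<le> j" "j < k" "e1 = {0,j}" unfolding H_def by auto
        show ?thesis
        proof (cases "e2 \<in> H")
          case True
          then obtain j' where j': "1 \<le> j'" "j' < k" "e2 = {0,j'}" unfolding H_def by auto
          then have "k + j - 1 = k + j' - 1" using eq j vH[OF j(1,2)] vH[OF j'(1,2)] by simp
          then have "j = j'" using j(1) j'(1) by simp
          then show ?thesis using j j' by simp
        next
          case False
          then have "e2 \<in> Lf" using c1 by simp
          then obtain x where x: "x \<in> SL" "e2 = {x, \<sigma> x}" unfolding Lf_def by auto
          then show ?thesis using eq j vH[OF j(1,2)] vL[OF x(1)] \<sigma>k[OF x(1)] by simp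
        qed
      next
        case False
        then have "e1 \<in> Lf" using c1 by simp
        then obtain x where x: "x \<in> SL" "e1 = {x, \<sigma> x}" unfolding Lf_def by auto
        show ?thesis
        proof (cases "e2 \<in> H")
          case True
          then obtain j' where j': "1 \<le> j'" "j' < k" "e2 = {0,j'}" unfolding H_def by auto
          then show ?thesis using eq x vH[OF j'(1,2)] vL[OF x(1)] \<sigma>k[OF x(1)] by simp
        next
          case False
          then have "e2 \<in> Lf" using c1 by simp
          then obtain x' where x': "x' \<in> SL" "e2 = {x', \<sigma> x'}" unfolding Lf_def by auto
          have "\<sigma> x = \<sigma> x'" using eq x x' vL[OF x(1)] vL[OF x'(1)] by simp
          then have "x = x'" using inj_onD[OF \<sigma>(2)] x(1) x'(1) by simp
          then show ?thesis using x x' by simp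
        qed
      qed
    qed
    have "S \<subseteq> TV" unfolding TV_def SL_def by auto
    then show ?thesis using tree rb by blast
  qed
  have "\<exists>c. colouring (SGE k n) (2 * k - 1) c \<and>
      (\<forall>S. S \<subseteq> {..<n} \<and> card S = k \<longrightarrow>
         (\<exists>TV TE. is_tree_in {..<n} (SGE k n) TV TE \<and> S \<subseteq> TV \<and> rainbow c TE))"
    using col P by blast
  then show ?thesis unfolding eq by (rule Least_le)
qed



lemma SG_crx_ge:
  assumes k: "2 \<le> k" and c: "1 \<le> c" and n: "n = k + k + (k - 1) * c ^ k + 1"
  shows "c \<le> crx k {..<n} (SGE k n)"
proof -
  define Q where "Q = (\<lambda>m. \<exists>col. colouring (SGE k n) m col \<and> (\<forall>S. S \<subseteq> {..<n} \<and> card S = k \<longrightarrow>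
         (\<exists>vs. is_cycle (SGE k n) vs \<and> S \<subseteq> set vs \<and> rainbow col (cycle_edges vs))))"
  have crx_eq: "crx k {..<n} (SGE k n) = Least Q" unfolding crx_def Q_def ..
  have n0: "0 < n" "2 * k \<le> n" using n by simp_all
  have kc: "k_cyclic k {..<n} (SGE k n)" by (rule SG_kcyc[OF k n0(2)])
  have icx: "colouring (SGE k n) (n * n) (icol n) \<and> inj_on (icol n) (SGE k n)"
    by (rule icol_SG[OF n0(1)])
  note ic = conjunct1[OF icx] conjunct2[OF icx]
  have PP: "\<exists>vs. is_cycle (SGE k n) vs \<and> S \<subseteq> set vs \<and> rainbow (icol n) (cycle_edges vs)"
    if S: "S \<subseteq> {..<n} \<and> card S = k" for S
  proof -
    have "\<exists>vs. is_cycle (SGE k n) vs \<and> S \<subseteq> set vs" using kc[unfolded k_cyclic_def, rule_format, OF S] .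
    then obtain vs where vs: "is_cycle (SGE k n) vs" "S \<subseteq> set vs" by (elim exE conjE)
    have "cycle_edges vs \<subseteq> SGE k n" using vs(1) unfolding is_cycle_def by simp
    then have "rainbow (icol n) (cycle_edges vs)" unfolding rainbow_def by (rule inj_on_subset[OF ic(2)])
    then show ?thesis using vs by (intro exI[of _ vs] conjI)
  qed
  have "Q (n * n)" unfolding Q_def
  proof (rule exI[of _ "icol n"], rule conjI)
    show "colouring (SGE k n) (n * n) (icol n)" by (rule ic(1))
    show "\<forall>S. S \<subseteq> {..<n} \<and> card S = k \<longrightarrow>
         (\<exists>vs. is_cycle (SGE k n) vs \<and> S \<subseteq> set vs \<and> rainbow (icol n) (cycle_edges vs))"
      by (intro allI impI) (rule PP)
  qed
  then have QL: "Q (Least Q)" by (rule LeastI)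
  have low: "c \<le> m" if Qm: "Q m" for m
  proof (rule ccontr)
    assume "\<not> c \<le> m"
    then have mc: "m \<le> c" by simp
    obtain col where col: "colouring (SGE k n) m col" and P: "\<forall>S. S \<subseteq> {..<n} \<and> card S = k \<longrightarrow>
         (\<exists>vs. is_cycle (SGE k n) vs \<and> S \<subseteq> set vs \<and> rainbow col (cycle_edges vs))" using Qm unfolding Q_def by (elim exE conjE)
    define \<phi> where "\<phi> = (\<lambda>x. map (\<lambda>h. col {x,h}) [0..<k])"
    define Vec where "Vec = {xs. set xs \<subseteq> {..<m} \<and> length xs = k}"
    have finV: "finite Vec" unfolding Vec_def by (rule finite_lists_length_eq) simp
    have cV: "card Vec = m ^ k" unfolding Vec_def using card_lists_length_eq[of "{..<m}" k] by simp
    have \<phi>V: "\<phi> ` {k..<n} \<subseteq> Vec"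
    proof (rule image_subsetI)
      fix x assume x: "x \<in> {k..<n}"
      have "col {x,h} \<in> {..<m}" if "h < k" for h
      proof -
        have "{x,h} \<in> SGE k n" using x that n0 by (intro SG_edge) auto
        then show ?thesis using col unfolding colouring_def by blast
      qed
      then show "\<phi> x \<in> Vec" unfolding Vec_def \<phi>_def by auto
    qed
    have "card Vec \<le> c ^ k" unfolding cV using mc by (simp add: power_mono)
    then have A1: "(k - 1) * card Vec \<le> (k - 1) * c ^ k" by (rule mult_le_mono2)
    have A2: "card {k..<n} = k + (k - 1) * c ^ k + 1" using n by simp
    have big: "(k - 1) * card Vec < card {k..<n}" unfolding A2 using A1 by linarith
    obtain vec where vec: "vec \<in> Vec" "k - 1 < card {x \<in> {k..<n}. \<phi> x = vec}"
      using pigeon_fiber[OF finite_atLeastLessThan \<phi>V finV big] by blast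
    then have "k \<le> card {x \<in> {k..<n}. \<phi> x = vec}" by simp
    then obtain T where T: "T \<subseteq> {x \<in> {k..<n}. \<phi> x = vec}" "card T = k" "finite T"
      by (rule obtain_subset_with_card_n)
    have Tn: "T \<subseteq> {..<n}" "T \<subseteq> {k..<n}" using T(1) by auto
    have "\<exists>vs. is_cycle (SGE k n) vs \<and> T \<subseteq> set vs \<and> rainbow col (cycle_edges vs)"
      using P[rule_format, of T] Tn(1) T(2) by simp
    then obtain vs where vs: "is_cycle (SGE k n) vs" "T \<subseteq> set vs" "rainbow col (cycle_edges vs)"
      by (elim exE conjE)
    have colT: "col {x,h} = vec ! h" if "x \<in> T" "h < k" for x h
    proof -
      have "\<phi> x = vec" using T(1) that(1) by auto
      then show ?thesis using that(2) unfolding \<phi>_def by auto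
    qed
    show False using twin_count[OF vs(1) vs(2) Tn(2) T(2) _ colT vs(3)] k by simp
  qed
  show ?thesis using low[OF QL] crx_eq by simp
qed



theorem theorem2p7:
  fixes k :: nat
  assumes "k \<ge> 1"
  shows "(\<forall>N. \<exists>(V :: nat set) E. simple_graph V E \<and> graph_connected V E \<and> k_cyclic k V E
            \<and> k \<le> card V \<and> N \<le> card V
            \<and> crx k V E = rx k V E + (if k = 1 then 3 else if k \<le> 3 then 2 else 1))
       \<and> (\<forall>c::nat. c \<ge> 1 \<longrightarrow> (\<exists>(V :: nat set) E. simple_graph V E \<and> graph_connected V E
            \<and> k_cyclic k V E \<and> k \<le> card V
            \<and> rx k V E \<le> k ^ 2 - 1 \<and> crx k V E \<ge> c))"
proof (rule conjI)
  show "\<forall>N. \<exists>(V :: nat set) E. simple_graph V E \<and> graph_connected V E \<and> k_cyclic k V E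
            \<and> k \<le> card V \<and> N \<le> card V
            \<and> crx k V E = rx k V E + (if k = 1 then 3 else if k \<le> 3 then 2 else 1)"
  proof
    fix N :: nat
    show "\<exists>(V :: nat set) E. simple_graph V E \<and> graph_connected V E \<and> k_cyclic k V E
            \<and> k \<le> card V \<and> N \<le> card V
            \<and> crx k V E = rx k V E + (if k = 1 then 3 else if k \<le> 3 then 2 else 1)"
    proof (cases "k = 1")
      case True
      define n where "n = N + 3"
      have n3: "3 \<le> n" unfolding n_def by simp
      have s: "simple_graph {..<n} (SGE 2 n)" by (rule SG_simple)
      have g: "graph_connected {..<n} (SGE 2 n)" by (rule SG_conn) (use n3 in simp_all)
      have kc: "k_cyclic k {..<n} (SGE 2 n)" unfolding True by (rule kcyc_from_crx[OF SG1_P[OF n3]])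
      have cr: "crx k {..<n} (SGE 2 n) = rx k {..<n} (SGE 2 n) + 3"
        unfolding True using crx_SG1[OF n3] by (simp add: rx_def)
      have "k \<le> card {..<n}" "N \<le> card {..<n}" using True n3 unfolding n_def by simp_all
      then show ?thesis using s g kc cr True by (intro exI[of _ "{..<n}"] exI[of _ "SGE 2 n"]) simp
    next
      case k1: False
      show ?thesis
      proof (cases "k = 2")
        case True
        define m where "m = N + 2"
        have m2: "2 \<le> m" unfolding m_def by simp
        have s: "simple_graph {..<2*m} (CPE m)" by (rule CP_simple)
        have g: "graph_connected {..<2*m} (CPE m)" by (rule CP_conn[OF m2])
        have kc: "k_cyclic k {..<2*m} (CPE m)" unfolding True by (rule kcyc_from_crx[OF CP_P[OF m2]])
        have cr: "crx k {..<2*m} (CPE m) = rx k {..<2*m} (CPE m) + 2"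
          unfolding True using crx_CP[OF m2] rx_CP[OF m2] by simp
        have "k \<le> card {..<2*m}" "N \<le> card {..<2*m}" using True m2 unfolding m_def by simp_all
        then show ?thesis using s g kc cr True by (intro exI[of _ "{..<2*m}"] exI[of _ "CPE m"]) simp
      next
        case k2: False
        show ?thesis
        proof (cases "k = 3")
          case True
          define n where "n = N + 5"
          have n5: "5 \<le> n" unfolding n_def by simp
          then have n3: "3 \<le> n" by simp
          have s: "simple_graph {..<n} (CE n)" by (rule CE_simple[OF n3])
          have g: "graph_connected {..<n} (CE n)" by (rule CE_conn[OF n3])
          have kc: "k_cyclic k {..<n} (CE n)" by (rule kcyc_C[OF n3])
          have "crx 3 {..<n} (CE n) = n" using crx_C[OF n3, of 3] n5 by simp
          moreover have "rx 3 {..<n} (CE n) = n - 2" by (rule rx_C3[OF n5])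
          ultimately have cr: "crx k {..<n} (CE n) = rx k {..<n} (CE n) + 2" unfolding True using n5 by simp
          have "k \<le> card {..<n}" "N \<le> card {..<n}" using True n5 unfolding n_def by simp_all
          then show ?thesis using s g kc cr True by (intro exI[of _ "{..<n}"] exI[of _ "CE n"]) simp
        next
          case k3: False
          have k4: "4 \<le> k" using assms k1 k2 k3 by simp
          define n where "n = N + k + 4"
          have n4: "4 \<le> n" "k \<le> n" unfolding n_def by simp_all
          then have n3: "3 \<le> n" by simp
          have s: "simple_graph {..<n} (CE n)" by (rule CE_simple[OF n3])
          have g: "graph_connected {..<n} (CE n)" by (rule CE_conn[OF n3])
          have kc: "k_cyclic k {..<n} (CE n)" by (rule kcyc_C[OF n3])
          have "crx k {..<n} (CE n) = n" using crx_C[OF n3 assms n4(2)] .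
          moreover have "rx k {..<n} (CE n) = n - 1" by (rule rx_C4[OF n4(1) k4 n4(2)])
          ultimately have cr: "crx k {..<n} (CE n) = rx k {..<n} (CE n) + 1" using n4 by simp
          have "k \<le> card {..<n}" "N \<le> card {..<n}" unfolding n_def by simp_all
          then show ?thesis using s g kc cr k1 k2 k3 k4 by (intro exI[of _ "{..<n}"] exI[of _ "CE n"]) simp
        qed
      qed
    qed
  qed
next
  show "\<forall>c::nat. c \<ge> 1 \<longrightarrow> (\<exists>(V :: nat set) E. simple_graph V E \<and> graph_connected V E
            \<and> k_cyclic k V E \<and> k \<le> card V
            \<and> rx k V E \<le> k ^ 2 - 1 \<and> crx k V E \<ge> c)"
  proof (intro allI impI)
    fix c :: nat assume c: "c \<ge> 1"
    show "\<exists>(V :: nat set) E. simple_graph V E \<and> graph_connected V E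
            \<and> k_cyclic k V E \<and> k \<le> card V
            \<and> rx k V E \<le> k ^ 2 - 1 \<and> crx k V E \<ge> c"
    proof (cases "k = 1")
      case True
      define n where "n = c + 3"
      have n3: "3 \<le> n" unfolding n_def by simp
      have s: "simple_graph {..<n} (CE n)" by (rule CE_simple[OF n3])
      have g: "graph_connected {..<n} (CE n)" by (rule CE_conn[OF n3])
      have kc: "k_cyclic k {..<n} (CE n)" by (rule kcyc_C[OF n3])
      have "crx 1 {..<n} (CE n) = n" using crx_C[OF n3, of 1] n3 by simp
      then have cr: "c \<le> crx k {..<n} (CE n)" unfolding True n_def by simp
      have rr: "rx k {..<n} (CE n) \<le> k ^ 2 - 1" unfolding True by (simp add: rx_def)
      have "k \<le> card {..<n}" using True n3 by simp
      then show ?thesis using s g kc cr rr by (intro exI[of _ "{..<n}"] exI[of _ "CE n"]) simp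
    next
      case False
      then have k2: "2 \<le> k" using assms by simp
      define n where "n = k + k + (k - 1) * c ^ k + 1"
      have n2: "2 * k \<le> n" "k \<le> n" "0 < n" unfolding n_def by simp_all
      have s: "simple_graph {..<n} (SGE k n)" by (rule SG_simple)
      have g: "graph_connected {..<n} (SGE k n)" by (rule SG_conn) (use k2 n2 in simp_all)
      have kc: "k_cyclic k {..<n} (SGE k n)" by (rule SG_kcyc[OF k2 n2(1)])
      have cr: "c \<le> crx k {..<n} (SGE k n)" by (rule SG_crx_ge[OF k2 c n_def])
      have "rx k {..<n} (SGE k n) \<le> 2 * k - 1" by (rule SG_rx_le[OF k2 n2(2)])
      moreover have "2 * k \<le> k ^ 2" using k2 unfolding power2_eq_square by (rule mult_le_mono1)
      ultimately have rr: "rx k {..<n} (SGE k n) \<le> k ^ 2 - 1" by simp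
      have "k \<le> card {..<n}" using n2 by simp
      then show ?thesis using s g kc cr rr by (intro exI[of _ "{..<n}"] exI[of _ "SGE k n"]) simp
    qed
  qed
qed


end
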